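(* Let $X$ be a represented space, let $Y$ be a computable metric space and let $f:X\to Y$ be a single-valued (total) function. If there is a multi-valued function $g$ (not necessarily computable) with values in $\mathrm{Tr}$ such that $f\le_W\tfrac12\text{-}\mathsf{WWKL}\circ g$, then $f$ is computable.
   Context: A represented space is a pair $(X,\delta_X)$ with $\delta_X:\subseteq\mathbb{N}^\mathbb{N}\to X$ a partial surjection; a computable metric space is represented by its Cauchy representation. A realizer of $f:\subseteq X\rightrightarrows Y$ is a partial $F$ with $\delta_Y F(p)\in f(\delta_X(p))$ for all $p\in\mathrm{dom}(f\circ\delta_X)$; $f$ is computable if it has a computable realizer. $f\le_W g$ if there are computable partial $H,K:\subseteq\mathbb{N}^\mathbb{N}\to\mathbb{N}^\mathbb{N}$ such that $p\mapsto H\langle p,GK(p)\rangle$ realizes $f$ for every realizer $G$ of $g$. Composition of multi-valued functions: $(h\circ g)(x)=\{z:\exists y\in g(x),\ z\in h(y)\}$ with $\mathrm{dom}(h\circ g)=\{x:g(x)\subseteq\mathrm{dom}(h)\}$. $\mathrm{Tr}$ is the set of binary trees $T\subseteq\{0,1\}^*$, represented by characteristic functions; $[T]$ its set of infinite paths; $\mu$ the uniform measure on $2^\mathbb N$ ($\mu(w2^\mathbb N)=2^{-|w|}$). $\tfrac12\text{-}\mathsf{WWKL}:\subseteq\mathrm{Tr}\rightrightarrows2^\mathbb N$, $T\mapsto[T]$, with domain $\{T:\mu([T])>\tfrac12\}$. *)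

theory Defs
  imports "HOL-Probability.Probability" "HOL-Library.Nat_Bijection"
begin

text \<open>General recursive functions with regular minimisation (the class of total
recursive functions). recfn n f: f is a recursive function of arity n,
acting on argument lists of length n.\<close>

definition prim_rec_op :: "(nat list \<Rightarrow> nat) \<Rightarrow> (nat list \<Rightarrow> nat) \<Rightarrow> nat list \<Rightarrow> nat" where
  "prim_rec_op g h = (\<lambda>xs. rec_nat (g (tl xs)) (\<lambda>k acc. h (k # acc # tl xs)) (hd xs))"

inductive recfn :: "nat \<Rightarrow> (nat list \<Rightarrow> nat) \<Rightarrow> bool" where
  rf_zero: "recfn n (\<lambda>xs. 0)"
| rf_succ: "recfn 1 (\<lambda>xs. Suc (xs ! 0))"
| rf_proj: "i < n \<Longrightarrow> recfn n (\<lambda>xs. xs ! i)"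
| rf_comp: "recfn m f \<Longrightarrow> length gs = m \<Longrightarrow> \<forall>g\<in>set gs. recfn n g
             \<Longrightarrow> recfn n (\<lambda>xs. f (map (\<lambda>g. g xs) gs))"
| rf_prec: "recfn n g \<Longrightarrow> recfn (Suc (Suc n)) h \<Longrightarrow> recfn (Suc n) (prim_rec_op g h)"
| rf_mu: "recfn (Suc n) g \<Longrightarrow> (\<forall>xs. length xs = n \<longrightarrow> (\<exists>y. g (y # xs) = 0))
             \<Longrightarrow> recfn n (\<lambda>xs. LEAST y. g (y # xs) = 0)"

definition total_computable :: "(nat \<Rightarrow> nat) \<Rightarrow> bool" where
  "total_computable a \<longleftrightarrow> (\<exists>r. recfn 1 r \<and> (\<forall>x. a x = r [x]))"

type_synonym baire = "nat \<Rightarrow> nat"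

definition k2_found :: "baire \<Rightarrow> baire \<Rightarrow> nat \<Rightarrow> nat \<Rightarrow> bool" where
  "k2_found a p n m \<longleftrightarrow> a (list_encode (n # map p [0..<m])) > 0"

definition kleene_app :: "baire \<Rightarrow> baire \<Rightarrow> baire option" where
  "kleene_app a p =
     (if \<forall>n. \<exists>m. k2_found a p n m
      then Some (\<lambda>n. a (list_encode (n # map p [0..<(LEAST m. k2_found a p n m)])) - 1)
      else None)"

definition computable_pf :: "(baire \<Rightarrow> baire option) \<Rightarrow> bool" where
  "computable_pf F \<longleftrightarrow>
     (\<exists>a. total_computable a \<and> (\<forall>p. F p \<noteq> None \<longrightarrow> kleene_app a p = F p))"

definition bpair :: "baire \<Rightarrow> baire \<Rightarrow> baire" where
  "bpair p q = (\<lambda>n. if even n then p (n div 2) else q (n div 2))"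

definition representation :: "(baire \<Rightarrow> 'a option) \<Rightarrow> bool" where
  "representation d \<longleftrightarrow> (\<forall>x. \<exists>p. d p = Some x)"

text \<open>Multi-valued partial functions are modelled as set-valued functions;
the domain is the set of points with nonempty value set.\<close>
definition mv_dom :: "('a \<Rightarrow> 'b set) \<Rightarrow> 'a set" where
  "mv_dom F = {x. F x \<noteq> {}}"

definition mv_comp :: "('b \<Rightarrow> 'c set) \<Rightarrow> ('a \<Rightarrow> 'b set) \<Rightarrow> 'a \<Rightarrow> 'c set" where
  "mv_comp h g = (\<lambda>x. if g x \<subseteq> mv_dom h then {z. \<exists>y\<in>g x. z \<in> h y} else {})"

definition realizer ::
  "(baire \<Rightarrow> 'a option) \<Rightarrow> (baire \<Rightarrow> 'b option) \<Rightarrow> ('a \<Rightarrow> 'b set) \<Rightarrow> (baire \<Rightarrow> baire option) \<Rightarrow> bool" where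
  "realizer dX dY F G \<longleftrightarrow>
     (\<forall>p x. dX p = Some x \<and> x \<in> mv_dom F \<longrightarrow>
        (\<exists>q y. G p = Some q \<and> dY q = Some y \<and> y \<in> F x))"

definition computable_mv ::
  "(baire \<Rightarrow> 'a option) \<Rightarrow> (baire \<Rightarrow> 'b option) \<Rightarrow> ('a \<Rightarrow> 'b set) \<Rightarrow> bool" where
  "computable_mv dX dY F \<longleftrightarrow> (\<exists>G. computable_pf G \<and> realizer dX dY F G)"

definition weihrauch_le ::
  "(baire \<Rightarrow> 'a option) \<Rightarrow> (baire \<Rightarrow> 'b option) \<Rightarrow> ('a \<Rightarrow> 'b set) \<Rightarrow>
   (baire \<Rightarrow> 'c option) \<Rightarrow> (baire \<Rightarrow> 'd option) \<Rightarrow> ('c \<Rightarrow> 'd set) \<Rightarrow> bool" where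
  "weihrauch_le dX dY F dZ dW G \<longleftrightarrow>
     (\<exists>H K. computable_pf H \<and> computable_pf K \<and>
        (\<forall>GG. realizer dZ dW G GG \<longrightarrow>
           realizer dX dY F (\<lambda>p. Option.bind (K p) (\<lambda>k. Option.bind (GG k) (\<lambda>q. H (bpair p q))))))"

definition rat_of_code :: "nat \<Rightarrow> real" where
  "rat_of_code k = (let (a, r) = prod_decode k; (b, c) = prod_decode r
                    in (real a - real b) / (real c + 1))"

definition computable_metric_space :: "(nat \<Rightarrow> 'b::metric_space) \<Rightarrow> bool" where
  "computable_metric_space s \<longleftrightarrow>
     closure (range s) = UNIV \<and>
     (\<exists>h. total_computable h \<and>
        (\<forall>i j n. \<bar>dist (s i) (s j) - rat_of_code (h (prod_encode (prod_encode (i, j), n)))\<bar>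
                  \<le> (1/2) ^ n))"

definition cauchy_rep :: "(nat \<Rightarrow> 'b::metric_space) \<Rightarrow> baire \<Rightarrow> 'b option" where
  "cauchy_rep s p =
     (if (\<forall>i j. i < j \<longrightarrow> dist (s (p i)) (s (p j)) < (1/2) ^ i) \<and>
         (\<exists>y. (\<lambda>n. s (p n)) \<longlonglongrightarrow> y)
      then Some (lim (\<lambda>n. s (p n))) else None)"

definition is_tree :: "bool list set \<Rightarrow> bool" where
  "is_tree T \<longleftrightarrow> (\<forall>w v. w @ v \<in> T \<longrightarrow> w \<in> T)"

definition Tr :: "bool list set set" where
  "Tr = {T. is_tree T}"

definition paths :: "bool list set \<Rightarrow> (nat \<Rightarrow> bool) set" where
  "paths T = {q. \<forall>n. map q [0..<n] \<in> T}"

text \<open>Shortlex bijection between binary words and natural numbers.\<close>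
definition word_code :: "bool list \<Rightarrow> nat" where
  "word_code w = foldl (\<lambda>acc b. 2 * acc + (if b then 1 else 0)) 1 w - 1"

definition tree_rep :: "baire \<Rightarrow> bool list set option" where
  "tree_rep p = (if (\<forall>n. p n \<le> 1) \<and> is_tree {w. p (word_code w) = 1}
                 then Some {w. p (word_code w) = 1} else None)"

definition cantor_rep :: "baire \<Rightarrow> (nat \<Rightarrow> bool) option" where
  "cantor_rep p = (if \<forall>n. p n \<le> 1 then Some (\<lambda>n. p n = 1) else None)"

definition cantor_measure :: "(nat \<Rightarrow> bool) measure" where
  "cantor_measure = (\<Pi>\<^sub>M i\<in>(UNIV::nat set). measure_pmf (bernoulli_pmf (1/2)))"

definition half_wwkl :: "bool list set \<Rightarrow> (nat \<Rightarrow> bool) set" where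
  "half_wwkl T = (if is_tree T \<and> measure cantor_measure (paths T) > 1/2 then paths T else {})"

end

theory Submission
  imports Defs
begin

definition cf :: "nat \<Rightarrow> (nat list \<Rightarrow> nat) \<Rightarrow> bool" where
  "cf n f \<longleftrightarrow> (\<exists>g. recfn n g \<and> (\<forall>xs. length xs = n \<longrightarrow> g xs = f xs))"

definition cp :: "nat \<Rightarrow> (nat list \<Rightarrow> bool) \<Rightarrow> bool" where
  "cp n P \<longleftrightarrow> cf n (\<lambda>xs. if P xs then 1 else 0)"

lemma cf_cong: "cf n f \<Longrightarrow> (\<And>xs. length xs = n \<Longrightarrow> f xs = g xs) \<Longrightarrow> cf n g"
  unfolding cf_def by metis

lemma cp_cong: "cp n P \<Longrightarrow> (\<And>xs. length xs = n \<Longrightarrow> P xs = Q xs) \<Longrightarrow> cp n Q"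
  unfolding cp_def by (erule cf_cong) auto

lemma cf_recfn: "recfn n f \<Longrightarrow> cf n f"
  unfolding cf_def by auto

lemma cf_zero: "cf n (\<lambda>xs. 0)"
  by (rule cf_recfn) (rule rf_zero)

lemma cf_proj: "i < n \<Longrightarrow> cf n (\<lambda>xs. xs ! i)"
  by (rule cf_recfn) (rule rf_proj)

lemma cf_comp:
  assumes "cf m f" "length gs = m" "\<forall>g\<in>set gs. cf n g"
  shows "cf n (\<lambda>xs. f (map (\<lambda>g. g xs) gs))"
proof -
  obtain f' where f': "recfn m f'" "\<And>xs. length xs = m \<Longrightarrow> f' xs = f xs"
    using assms(1) unfolding cf_def by auto
  define rep where "rep g = (SOME g'. recfn n g' \<and> (\<forall>xs. length xs = n \<longrightarrow> g' xs = g xs))" for g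
  have rep: "recfn n (rep g) \<and> (\<forall>xs. length xs = n \<longrightarrow> rep g xs = g xs)" if "g \<in> set gs" for g
  proof -
    have "\<exists>g'. recfn n g' \<and> (\<forall>xs. length xs = n \<longrightarrow> g' xs = g xs)"
      using assms(3) that unfolding cf_def by blast
    from someI_ex[OF this] show ?thesis unfolding rep_def .
  qed
  have "recfn n (\<lambda>xs. f' (map (\<lambda>g. g xs) (map rep gs)))"
    by (rule rf_comp) (use f' assms rep in auto)
  moreover have "length xs = n \<Longrightarrow> f' (map (\<lambda>g. g xs) (map rep gs)) = f (map (\<lambda>g. g xs) gs)" for xs
  proof -
    assume l: "length xs = n"
    have e: "map ((\<lambda>g. g xs) \<circ> rep) gs = map (\<lambda>g. g xs) gs"
      by (rule map_cong) (use rep l in auto)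
    show ?thesis by (simp only: map_map e) (simp add: f' assms)
  qed
  ultimately show ?thesis unfolding cf_def by blast
qed

lemma cf_prec:
  assumes "cf n g" "cf (Suc (Suc n)) h"
  shows "cf (Suc n) (prim_rec_op g h)"
proof -
  obtain g' where g': "recfn n g'" "\<And>xs. length xs = n \<Longrightarrow> g' xs = g xs"
    using assms(1) unfolding cf_def by auto
  obtain h' where h': "recfn (Suc (Suc n)) h'" "\<And>xs. length xs = Suc (Suc n) \<Longrightarrow> h' xs = h xs"
    using assms(2) unfolding cf_def by auto
  have "prim_rec_op g' h' xs = prim_rec_op g h xs" if "length xs = Suc n" for xs
  proof -
    have "rec_nat (g' (tl xs)) (\<lambda>k acc. h' (k # acc # tl xs)) k = rec_nat (g (tl xs)) (\<lambda>k acc. h (k # acc # tl xs)) k" for k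
      by (induction k) (use that g' h' in auto)
    then show ?thesis unfolding prim_rec_op_def by simp
  qed
  then show ?thesis unfolding cf_def using rf_prec[OF g'(1) h'(1)] by blast
qed

lemma cf_mu:
  assumes "cf (Suc n) g" "\<And>xs. length xs = n \<Longrightarrow> \<exists>y. g (y # xs) = 0"
  shows "cf n (\<lambda>xs. LEAST y. g (y # xs) = 0)"
proof -
  obtain g' where g': "recfn (Suc n) g'" "\<And>xs. length xs = Suc n \<Longrightarrow> g' xs = g xs"
    using assms(1) unfolding cf_def by auto
  have "recfn n (\<lambda>xs. LEAST y. g' (y # xs) = 0)"
    by (rule rf_mu) (use g' assms(2) in auto)
  moreover have "length xs = n \<Longrightarrow> (LEAST y. g' (y # xs) = 0) = (LEAST y. g (y # xs) = 0)" for xs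
    using g' by simp
  ultimately show ?thesis unfolding cf_def by blast
qed

lemma total_computable_cf: "cf 1 (\<lambda>xs. a (hd xs)) \<Longrightarrow> total_computable a"
  unfolding cf_def total_computable_def by force

lemma cf_total_computable: "total_computable a \<Longrightarrow> cf 1 (\<lambda>xs. a (hd xs))"
  unfolding cf_def total_computable_def
proof (elim exE conjE, intro exI conjI allI impI)
  fix r and xs :: "nat list" assume "recfn 1 r" "\<forall>x. a x = r [x]" "length xs = 1"
  then show "r xs = a (hd xs)" by (cases xs) auto
qed auto

lemma cf_Suc: "cf n f \<Longrightarrow> cf n (\<lambda>xs. Suc (f xs))"
proof -
  assume "cf n f"
  have "cf 1 (\<lambda>xs. Suc (xs ! 0))" by (rule cf_recfn) (rule rf_succ)
  from cf_comp[OF this, of "[f]" n] \<open>cf n f\<close> show ?thesis by simp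
qed

lemma cf_const: "cf n (\<lambda>xs. c)"
  by (induction c) (auto intro: cf_zero cf_Suc)

lemma cf_comp_idx:
  assumes "cf m f" "\<And>i. i < m \<Longrightarrow> cf n (gs i)"
  shows "cf n (\<lambda>xs. f (map (\<lambda>i. gs i xs) [0..<m]))"
  using cf_comp[OF assms(1), of "map gs [0..<m]" n] assms(2) by (simp add: comp_def)

lemma map_nth_upt: "map (\<lambda>i. xs ! i) [0..<length xs] = xs"
  by (simp add: map_nth)

lemma cf_rec:
  assumes "cf n z" "cf (Suc (Suc n)) (\<lambda>ys. st (hd ys) (hd (tl ys)) (tl (tl ys)))" "cf n b"
  shows "cf n (\<lambda>xs. rec_nat (z xs) (\<lambda>k acc. st k acc xs) (b xs))"
proof -
  have p: "cf (Suc n) (prim_rec_op z (\<lambda>ys. st (hd ys) (hd (tl ys)) (tl (tl ys))))"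
    by (rule cf_prec) (use assms in auto)
  have "cf n (\<lambda>xs. prim_rec_op z (\<lambda>ys. st (hd ys) (hd (tl ys)) (tl (tl ys)))
                   (map (\<lambda>i. (if i = 0 then b else (\<lambda>xs. xs ! (i - 1))) xs) [0..<Suc n]))"
    by (rule cf_comp_idx[OF p]) (auto intro: assms(3) cf_proj)
  then show ?thesis
  proof (rule cf_cong)
    fix xs :: "nat list" assume l: "length xs = n"
    have "map (\<lambda>i. (if i = 0 then b else (\<lambda>xs. xs ! (i - 1))) xs) [0..<Suc n] = b xs # xs"
    proof -
      have "[0..<Suc n] = 0 # map Suc [0..<n]" by (simp add: map_Suc_upt upt_conv_Cons)
      then show ?thesis using l[symmetric] by (simp add: comp_def map_nth del: upt_Suc)
    qed
    then show "prim_rec_op z (\<lambda>ys. st (hd ys) (hd (tl ys)) (tl (tl ys)))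
                   (map (\<lambda>i. (if i = 0 then b else (\<lambda>xs. xs ! (i - 1))) xs) [0..<Suc n])
          = rec_nat (z xs) (\<lambda>k acc. st k acc xs) (b xs)"
      by (simp add: prim_rec_op_def)
  qed
qed

lemma map_nth_n: "length zs = n \<Longrightarrow> map ((!) zs) [0..<n] = zs"
proof - assume "length zs = n" then show ?thesis using map_nth[of zs] by simp qed

lemma cf_tl1: "cf n f \<Longrightarrow> cf (Suc n) (\<lambda>ys. f (tl ys))"
proof -
  assume a: "cf n f"
  have "cf (Suc n) (\<lambda>ys. f (map (\<lambda>i. (\<lambda>ys. ys ! Suc i) ys) [0..<n]))"
    by (rule cf_comp_idx[OF a]) (auto intro: cf_proj)
  then show ?thesis
  proof (rule cf_cong)
    fix ys :: "nat list" assume "length ys = Suc n"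
    then obtain y zs where "ys = y # zs" "length zs = n" by (cases ys) auto
    then show "f (map (\<lambda>i. (\<lambda>ys. ys ! Suc i) ys) [0..<n]) = f (tl ys)"
      by (simp add: map_nth_n)
  qed
qed

lemma cf_hd: "cf (Suc n) hd"
proof -
  have "cf (Suc n) (\<lambda>ys. ys ! 0)" by (rule cf_proj) simp
  then show ?thesis by (rule cf_cong) (case_tac xs, auto)
qed

lemma cf_drop1: "cf (Suc n) f \<Longrightarrow> cf (Suc (Suc n)) (\<lambda>ys. f (hd ys # tl (tl ys)))"
proof -
  assume a: "cf (Suc n) f"
  have "cf (Suc (Suc n)) (\<lambda>ys. f (map (\<lambda>i. (\<lambda>ys. ys ! (if i = 0 then 0 else Suc i)) ys) [0..<Suc n]))"
    by (rule cf_comp_idx[OF a]) (auto intro: cf_proj)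
  then show ?thesis
  proof (rule cf_cong)
    fix ys :: "nat list" assume "length ys = Suc (Suc n)"
    then obtain y y' zs where "ys = y # y' # zs" "length zs = n"
      by (metis Suc_length_conv)
    moreover have "[0..<Suc n] = 0 # map Suc [0..<n]" by (simp add: upt_conv_Cons map_Suc_upt)
    ultimately show "f (map (\<lambda>i. (\<lambda>ys. ys ! (if i = 0 then 0 else Suc i)) ys) [0..<Suc n]) = f (hd ys # tl (tl ys))"
      by (simp add: comp_def map_nth_n del: upt_Suc)
  qed
qed

lemma rec_add: "rec_nat a (\<lambda>k acc. Suc acc) b = a + (b::nat)"
  by (induction b) auto
lemma rec_pred: "rec_nat 0 (\<lambda>k acc. k) b = (b::nat) - 1"
  by (induction b) auto
lemma rec_sub: "rec_nat a (\<lambda>k acc. acc - Suc 0) b = a - (b::nat)"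
  by (induction b) auto
lemma rec_mult: "rec_nat 0 (\<lambda>k acc. acc + a) b = a * (b::nat)"
  by (induction b) auto
lemma rec_pow: "rec_nat (Suc 0) (\<lambda>k acc. acc * a) b = a ^ (b::nat)"
  by (induction b) (simp_all add: power_Suc2)
lemma rec_sum: "rec_nat 0 (\<lambda>k acc. acc + F k) b = (\<Sum>i<b. F i :: nat)"
  by (induction b) auto
lemma rec_ball: "rec_nat (Suc 0) (\<lambda>k acc. acc * (if P k then 1 else 0)) b = (if \<forall>i<b. P i then 1 else (0::nat))"
  by (induction b) (auto simp: less_Suc_eq)

lemma cf_tl_hd: "cf (Suc (Suc n)) (\<lambda>ys. hd (tl ys))"
  using cf_tl1[OF cf_hd] .
lemma cf_tl2_hd: "cf (Suc (Suc (Suc n))) (\<lambda>ys. hd (tl (tl ys)))"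
  using cf_tl1[OF cf_tl_hd] .
lemma cf_tl3_hd: "cf (Suc (Suc (Suc (Suc n)))) (\<lambda>ys. hd (tl (tl (tl ys))))"
  using cf_tl1[OF cf_tl2_hd] .
lemma cf_tl4_hd: "cf (Suc (Suc (Suc (Suc (Suc n))))) (\<lambda>ys. hd (tl (tl (tl (tl ys)))))"
  using cf_tl1[OF cf_tl3_hd] .
lemma cf_tl5_hd: "cf (Suc (Suc (Suc (Suc (Suc (Suc n)))))) (\<lambda>ys. hd (tl (tl (tl (tl (tl ys))))))"
  using cf_tl1[OF cf_tl4_hd] .
lemma cf_tl6_hd: "cf (Suc (Suc (Suc (Suc (Suc (Suc (Suc n))))))) (\<lambda>ys. hd (tl (tl (tl (tl (tl (tl ys)))))))"
  using cf_tl1[OF cf_tl5_hd] .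
lemma cf_tl2: "cf n f \<Longrightarrow> cf (Suc (Suc n)) (\<lambda>ys. f (tl (tl ys)))"
  using cf_tl1[OF cf_tl1] by simp

lemma ind_simps: "(Suc 0 \<le> (if P then 1 else 0::nat)) = P" "(1 - (if P then 1 else 0::nat) = 0) = P"
  by auto

lemma cf_add: "cf n f \<Longrightarrow> cf n g \<Longrightarrow> cf n (\<lambda>xs. f xs + g xs)"
proof -
  assume "cf n f" "cf n g"
  have "cf n (\<lambda>xs. rec_nat (f xs) (\<lambda>k acc. Suc acc) (g xs))"
    using \<open>cf n f\<close> \<open>cf n g\<close> by (intro cf_rec cf_Suc cf_tl_hd)
  then show ?thesis by (rule cf_cong) (simp add: rec_add)
qed

lemma cf_pred: "cf n f \<Longrightarrow> cf n (\<lambda>xs. f xs - 1)"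
proof -
  assume "cf n f"
  have "cf n (\<lambda>xs. rec_nat 0 (\<lambda>k acc. k) (f xs))"
    using \<open>cf n f\<close> by (intro cf_rec cf_const cf_hd)
  then show ?thesis by (rule cf_cong) (simp add: rec_pred)
qed

lemma cf_sub: "cf n f \<Longrightarrow> cf n g \<Longrightarrow> cf n (\<lambda>xs. f xs - g xs)"
proof -
  assume "cf n f" "cf n g"
  have "cf n (\<lambda>xs. rec_nat (f xs) (\<lambda>k acc. acc - 1) (g xs))"
    using \<open>cf n f\<close> \<open>cf n g\<close> by (intro cf_rec cf_pred cf_tl_hd)
  then show ?thesis by (rule cf_cong) (simp add: rec_sub)
qed

lemma cf_mult: "cf n f \<Longrightarrow> cf n g \<Longrightarrow> cf n (\<lambda>xs. f xs * g xs)"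
proof -
  assume "cf n f" "cf n g"
  have "cf n (\<lambda>xs. rec_nat 0 (\<lambda>k acc. acc + f xs) (g xs))"
    using \<open>cf n f\<close> \<open>cf n g\<close> by (intro cf_rec cf_add cf_const cf_tl_hd cf_tl2)
  then show ?thesis by (rule cf_cong) (simp add: rec_mult)
qed

lemma cf_pow: "cf n f \<Longrightarrow> cf n g \<Longrightarrow> cf n (\<lambda>xs. f xs ^ g xs)"
proof -
  assume "cf n f" "cf n g"
  have "cf n (\<lambda>xs. rec_nat 1 (\<lambda>k acc. acc * f xs) (g xs))"
    using \<open>cf n f\<close> \<open>cf n g\<close> by (intro cf_rec cf_mult cf_const cf_tl_hd cf_tl2)
  then show ?thesis by (rule cf_cong) (simp add: rec_pow)
qed

lemma cf_sum: "cf (Suc n) (\<lambda>ys. F (hd ys) (tl ys)) \<Longrightarrow> cf n B \<Longrightarrow> cf n (\<lambda>xs. \<Sum>i<B xs. F i xs)"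
proof -
  assume a: "cf (Suc n) (\<lambda>ys. F (hd ys) (tl ys))" and b: "cf n B"
  have "cf (Suc (Suc n)) (\<lambda>ys. hd (tl ys) + F (hd ys) (tl (tl ys)))"
    using cf_add[OF cf_tl1[OF cf_hd] cf_drop1[OF a]] by simp
  then have "cf n (\<lambda>xs. rec_nat 0 (\<lambda>k acc. acc + F k xs) (B xs))"
    by (intro cf_rec cf_const b) simp
  then show ?thesis by (rule cf_cong) (simp add: rec_sum)
qed

lemma cp_ball: "cp (Suc n) (\<lambda>ys. P (hd ys) (tl ys)) \<Longrightarrow> cf n B \<Longrightarrow> cp n (\<lambda>xs. \<forall>i<B xs. P i xs)"
proof -
  assume a: "cp (Suc n) (\<lambda>ys. P (hd ys) (tl ys))" and b: "cf n B"
  have "cf (Suc (Suc n)) (\<lambda>ys. hd (tl ys) * (if P (hd ys) (tl (tl ys)) then 1 else 0))"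
    using cf_mult[OF cf_tl1[OF cf_hd] cf_drop1[OF a[unfolded cp_def]]] by simp
  then have "cf n (\<lambda>xs. rec_nat 1 (\<lambda>k acc. acc * (if P k xs then 1 else 0)) (B xs))"
    by (intro cf_rec cf_const b) simp
  then show ?thesis unfolding cp_def by (rule cf_cong) (simp add: rec_ball)
qed

lemma cf_least: "cp (Suc n) (\<lambda>ys. P (hd ys) (tl ys)) \<Longrightarrow> (\<And>xs. length xs = n \<Longrightarrow> \<exists>y. P y xs)
   \<Longrightarrow> cf n (\<lambda>xs. LEAST y. P y xs)"
proof -
  assume a: "cp (Suc n) (\<lambda>ys. P (hd ys) (tl ys))" and e: "\<And>xs. length xs = n \<Longrightarrow> \<exists>y. P y xs"
  note c = cf_sub[OF cf_const a[unfolded cp_def], of 1]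
  show ?thesis using cf_mu[OF c] e by (simp add: ind_simps)
qed

lemma cp_eq: "cf n f \<Longrightarrow> cf n g \<Longrightarrow> cp n (\<lambda>xs. f xs = g xs)"
proof -
  assume "cf n f" "cf n g"
  then have "cf n (\<lambda>xs. 1 - ((f xs - g xs) + (g xs - f xs)))" by (intro cf_sub cf_add cf_const)
  then show ?thesis unfolding cp_def by (rule cf_cong) auto
qed
lemma cp_le: "cf n f \<Longrightarrow> cf n g \<Longrightarrow> cp n (\<lambda>xs. f xs \<le> g xs)"
proof -
  assume "cf n f" "cf n g"
  then have "cf n (\<lambda>xs. 1 - (f xs - g xs))" by (intro cf_sub cf_const)
  then show ?thesis unfolding cp_def by (rule cf_cong) auto
qed
lemma cp_less: "cf n f \<Longrightarrow> cf n g \<Longrightarrow> cp n (\<lambda>xs. f xs < g xs)"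
proof -
  assume "cf n f" "cf n g"
  then have "cf n (\<lambda>xs. 1 - (Suc (f xs) - g xs))" by (intro cf_sub cf_const cf_Suc)
  then show ?thesis unfolding cp_def by (rule cf_cong) auto
qed
lemma cp_not: "cp n P \<Longrightarrow> cp n (\<lambda>xs. \<not> P xs)"
proof -
  assume "cp n P"
  then have "cf n (\<lambda>xs. 1 - (if P xs then 1 else 0))" unfolding cp_def by (intro cf_sub cf_const)
  then show ?thesis unfolding cp_def by (rule cf_cong) auto
qed
lemma cp_conj: "cp n P \<Longrightarrow> cp n Q \<Longrightarrow> cp n (\<lambda>xs. P xs \<and> Q xs)"
proof -
  assume "cp n P" "cp n Q"
  then have "cf n (\<lambda>xs. (if P xs then 1 else 0) * (if Q xs then 1 else 0))" unfolding cp_def by (intro cf_mult)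
  then show ?thesis unfolding cp_def by (rule cf_cong) auto
qed
lemma cp_disj: "cp n P \<Longrightarrow> cp n Q \<Longrightarrow> cp n (\<lambda>xs. P xs \<or> Q xs)"
proof -
  assume "cp n P" "cp n Q"
  then have "cp n (\<lambda>xs. \<not> (\<not> P xs \<and> \<not> Q xs))" by (intro cp_not cp_conj)
  then show ?thesis by simp
qed
lemma cp_imp: "cp n P \<Longrightarrow> cp n Q \<Longrightarrow> cp n (\<lambda>xs. P xs \<longrightarrow> Q xs)"
proof -
  assume "cp n P" "cp n Q"
  then have "cp n (\<lambda>xs. \<not> P xs \<or> Q xs)" by (intro cp_not cp_disj)
  then show ?thesis by simp
qed
lemma cp_const: "cp n (\<lambda>xs. c)"
  unfolding cp_def by (rule cf_const)
lemma cf_if: "cp n P \<Longrightarrow> cf n f \<Longrightarrow> cf n g \<Longrightarrow> cf n (\<lambda>xs. if P xs then f xs else g xs)"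
proof -
  assume "cp n P" "cf n f" "cf n g"
  then have "cf n (\<lambda>xs. (if P xs then 1 else 0) * f xs + (1 - (if P xs then 1 else 0)) * g xs)"
    unfolding cp_def by (intro cf_add cf_mult cf_sub cf_const)
  then show ?thesis by (rule cf_cong) auto
qed
lemma cp_bex: "cp (Suc n) (\<lambda>ys. P (hd ys) (tl ys)) \<Longrightarrow> cf n B \<Longrightarrow> cp n (\<lambda>xs. \<exists>i<B xs. P i xs)"
proof -
  assume "cp (Suc n) (\<lambda>ys. P (hd ys) (tl ys))" "cf n B"
  then have "cp n (\<lambda>xs. \<not> (\<forall>i<B xs. \<not> P i xs))" by (intro cp_not cp_ball) 
  then show ?thesis by simp
qed

lemma cf_bleast: "cp (Suc n) (\<lambda>ys. P (hd ys) (tl ys)) \<Longrightarrow> cf n B \<Longrightarrow> cf n (\<lambda>xs. LEAST y. y = B xs \<or> P y xs)"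
  by (rule cf_least) (auto intro!: cp_disj cp_eq cf_hd cf_tl1)

lemmas cf_intros = cf_add cf_sub cf_mult cf_pow cf_if cf_sum cf_bleast cf_Suc cf_const
  cf_hd cf_tl_hd cf_tl2_hd cf_tl3_hd cf_tl4_hd cf_tl5_hd cf_tl6_hd
  cp_eq cp_le cp_less cp_not cp_conj cp_disj cp_imp cp_ball cp_bex cp_const

lemma div_least: "0 < (y::nat) \<Longrightarrow> x div y = (LEAST q. q = x \<or> x < y * Suc q)"
proof (rule Least_equality[symmetric])
  assume y: "0 < y"
  show "x div y = x \<or> x < y * Suc (x div y)"
    using y by (metis dividend_less_times_div mult_Suc_right)
  fix q assume "q = x \<or> x < y * Suc q"
  then show "x div y \<le> q"
  proof
    assume "q = x" then show ?thesis by simp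
  next
    assume "x < y * Suc q"
    then have "x div y < Suc q" using y by (simp add: div_less_iff_less_mult mult.commute)
    then show ?thesis by simp
  qed
qed

lemma cf_div: "cf n f \<Longrightarrow> cf n g \<Longrightarrow> cf n (\<lambda>xs. f xs div g xs)"
proof -
  assume f: "cf n f" and g: "cf n g"
  have "cf n (\<lambda>xs. if g xs = 0 then 0 else LEAST q. q = f xs \<or> f xs < g xs * Suc q)"
    using f g by (intro cf_intros cf_tl1) 
  then show ?thesis by (rule cf_cong) (simp add: div_least)
qed

lemma cf_mod: "cf n f \<Longrightarrow> cf n g \<Longrightarrow> cf n (\<lambda>xs. f xs mod g xs)"
proof -
  assume f: "cf n f" and g: "cf n g"
  have "cf n (\<lambda>xs. f xs - g xs * (f xs div g xs))"
    using f g by (intro cf_intros cf_div)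
  then show ?thesis by (rule cf_cong) (simp add: minus_mult_div_eq_mod)
qed

lemma cf_penc: "cf n f \<Longrightarrow> cf n g \<Longrightarrow> cf n (\<lambda>xs. prod_encode (f xs, g xs))"
proof -
  assume f: "cf n f" and g: "cf n g"
  have "cf n (\<lambda>xs. (f xs + g xs) * Suc (f xs + g xs) div 2 + f xs)"
    using f g by (intro cf_intros cf_div)
  then show ?thesis by (rule cf_cong) (simp add: prod_encode_def triangle_def)
qed

lemma pd1_least: "fst (prod_decode k) = (LEAST a. a = k \<or> (\<exists>b<Suc k. prod_encode (a, b) = k))"
proof (rule Least_equality[symmetric])
  obtain a0 b0 where d: "prod_decode k = (a0, b0)" by (cases "prod_decode k")
  then have e: "prod_encode (a0, b0) = k" by (metis prod_decode_inverse)
  then have "b0 < Suc k" using le_prod_encode_2[of b0 a0] by simp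
  with e d show "fst (prod_decode k) = k \<or> (\<exists>b<Suc k. prod_encode (fst (prod_decode k), b) = k)" by auto
  fix y assume "y = k \<or> (\<exists>b<Suc k. prod_encode (y, b) = k)"
  then show "fst (prod_decode k) \<le> y"
  proof
    assume "y = k" then show ?thesis using le_prod_encode_1[of a0 b0] e d by simp
  next
    assume "\<exists>b<Suc k. prod_encode (y, b) = k"
    then obtain b where "prod_encode (y, b) = k" by auto
    then show ?thesis using d e by auto
  qed
qed

lemma pd2_least: "snd (prod_decode k) = (LEAST b. b = k \<or> (\<exists>a<Suc k. prod_encode (a, b) = k))"
proof (rule Least_equality[symmetric])
  obtain a0 b0 where d: "prod_decode k = (a0, b0)" by (cases "prod_decode k")
  then have e: "prod_encode (a0, b0) = k" by (metis prod_decode_inverse)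
  then have "a0 < Suc k" using le_prod_encode_1[of a0 b0] by simp
  with e d show "snd (prod_decode k) = k \<or> (\<exists>a<Suc k. prod_encode (a, snd (prod_decode k)) = k)" by auto
  fix y assume "y = k \<or> (\<exists>a<Suc k. prod_encode (a, y) = k)"
  then show "snd (prod_decode k) \<le> y"
  proof
    assume "y = k" then show ?thesis using le_prod_encode_2[of b0 a0] e d by simp
  next
    assume "\<exists>a<Suc k. prod_encode (a, y) = k"
    then obtain a where "prod_encode (a, y) = k" by auto
    then show ?thesis using d e by auto
  qed
qed

lemma cf_pd1: "cf n f \<Longrightarrow> cf n (\<lambda>xs. fst (prod_decode (f xs)))"
proof -
  assume f: "cf n f"
  have "cf n (\<lambda>xs. LEAST a. a = f xs \<or> (\<exists>b<Suc (f xs). prod_encode (a, b) = f xs))"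
    using f by (intro cf_intros cf_tl1 cf_tl2 cf_penc)
  then show ?thesis by (rule cf_cong) (simp only: pd1_least)
qed

lemma cf_pd2: "cf n f \<Longrightarrow> cf n (\<lambda>xs. snd (prod_decode (f xs)))"
proof -
  assume f: "cf n f"
  have "cf n (\<lambda>xs. LEAST b. b = f xs \<or> (\<exists>a<Suc (f xs). prod_encode (a, b) = f xs))"
    using f by (intro cf_intros cf_tl1 cf_tl2 cf_penc)
  then show ?thesis by (rule cf_cong) (simp only: pd2_least)
qed

definition lhd :: "nat \<Rightarrow> nat" where "lhd c = fst (prod_decode (c - 1))"
definition ltl :: "nat \<Rightarrow> nat" where "ltl c = snd (prod_decode (c - 1))"

lemma lhd_enc[simp]: "lhd (list_encode (x # l)) = x" by (simp add: lhd_def)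
lemma ltl_enc[simp]: "ltl (list_encode (x # l)) = list_encode l" by (simp add: ltl_def)
lemma lhd_enc'[simp]: "lhd (Suc (prod_encode (x, y))) = x" by (simp add: lhd_def)
lemma ltl_enc'[simp]: "ltl (Suc (prod_encode (x, y))) = y" by (simp add: ltl_def)
lemma ltl_0[simp]: "ltl 0 = 0" by (simp add: ltl_def prod_decode_def prod_decode_aux.simps)

lemma ltlk_enc: "(ltl ^^ k) (list_encode l) = list_encode (drop k l)"
proof (induction k arbitrary: l)
  case 0 then show ?case by simp
next
  case (Suc k)
  show ?case
  proof (cases l)
    case Nil then show ?thesis
      by (simp add: funpow_swap1) (induction k, auto)
  next
    case (Cons y ys) then show ?thesis by (simp add: funpow_swap1 Suc)
  qed
qed

lemma cf_lhd: "cf n f \<Longrightarrow> cf n (\<lambda>xs. lhd (f xs))"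
  unfolding lhd_def by (intro cf_pd1 cf_sub cf_const)
lemma cf_ltl: "cf n f \<Longrightarrow> cf n (\<lambda>xs. ltl (f xs))"
  unfolding ltl_def by (intro cf_pd2 cf_sub cf_const)

lemma rec_ltlk: "rec_nat c (\<lambda>k acc. ltl acc) k = (ltl ^^ k) c"
  by (induction k) auto

lemma cf_ltlk: "cf n f \<Longrightarrow> cf n g \<Longrightarrow> cf n (\<lambda>xs. (ltl ^^ g xs) (f xs))"
proof -
  assume f: "cf n f" and g: "cf n g"
  have "cf n (\<lambda>xs. rec_nat (f xs) (\<lambda>k acc. ltl acc) (g xs))"
    using f g by (intro cf_rec cf_ltl cf_tl_hd)
  then show ?thesis by (rule cf_cong) (simp add: rec_ltlk)
qed

definition lnth :: "nat \<Rightarrow> nat \<Rightarrow> nat" where "lnth c i = lhd ((ltl ^^ i) c)"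

lemma lnth_enc: "i < length l \<Longrightarrow> lnth (list_encode l) i = l ! i"
  unfolding lnth_def ltlk_enc by (simp add: Cons_nth_drop_Suc[symmetric])

lemma cf_lnth: "cf n f \<Longrightarrow> cf n g \<Longrightarrow> cf n (\<lambda>xs. lnth (f xs) (g xs))"
  unfolding lnth_def by (intro cf_lhd cf_ltlk)

definition llen :: "nat \<Rightarrow> nat" where "llen c = (LEAST i. i = c \<or> (ltl ^^ i) c = 0)"

lemma length_le_enc: "length l \<le> list_encode l"
  by (induction l) (auto, metis le_prod_encode_2 order_trans)

lemma llen_enc: "llen (list_encode l) = length l"
  unfolding llen_def
proof (rule Least_equality)
  show "length l = list_encode l \<or> (ltl ^^ length l) (list_encode l) = 0"
    by (simp add: ltlk_enc)
  fix y assume "y = list_encode l \<or> (ltl ^^ y) (list_encode l) = 0"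
  then show "length l \<le> y"
  proof
    assume "y = list_encode l" then show ?thesis using length_le_enc by simp
  next
    assume "(ltl ^^ y) (list_encode l) = 0"
    then have "list_encode (drop y l) = 0" by (simp add: ltlk_enc)
    then have "drop y l = []" by (metis list_encode_inverse list_decode.simps(1))
    then show ?thesis by simp
  qed
qed

lemma cf_llen: "cf n f \<Longrightarrow> cf n (\<lambda>xs. llen (f xs))"
  unfolding llen_def by (intro cf_intros cf_tl1 cf_ltlk)

lemma cf_subst_hd: "cf (Suc n) (\<lambda>ys. F (hd ys) (tl ys)) \<Longrightarrow> cf (Suc (Suc n)) e
   \<Longrightarrow> cf (Suc (Suc n)) (\<lambda>ys. F (e ys) (tl (tl ys)))"
proof -
  assume a: "cf (Suc n) (\<lambda>ys. F (hd ys) (tl ys))" and e: "cf (Suc (Suc n)) e"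
  have "cf (Suc (Suc n)) (\<lambda>ys. (\<lambda>ys. F (hd ys) (tl ys)) (map (\<lambda>i. (if i = 0 then e else (\<lambda>ys. ys ! Suc i)) ys) [0..<Suc n]))"
    by (rule cf_comp_idx[OF a]) (auto intro: cf_proj e)
  then show ?thesis
  proof (rule cf_cong)
    fix ys :: "nat list" assume "length ys = Suc (Suc n)"
    then obtain y y' zs where ys: "ys = y # y' # zs" "length zs = n"
      by (metis Suc_length_conv)
    have "[0..<Suc n] = 0 # map Suc [0..<n]" by (simp add: upt_conv_Cons map_Suc_upt)
    with ys show "(\<lambda>ys. F (hd ys) (tl ys)) (map (\<lambda>i. (if i = 0 then e else (\<lambda>ys. ys ! Suc i)) ys) [0..<Suc n]) = F (e ys) (tl (tl ys))"
      by (simp add: comp_def map_nth_n del: upt_Suc)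
  qed
qed

lemma rec_build: "k \<le> j \<Longrightarrow> rec_nat 0 (\<lambda>k acc. Suc (prod_encode (F (j - Suc k), acc))) k = list_encode (map F [j-k..<j])"
proof (induction k)
  case 0 then show ?case by simp
next
  case (Suc k)
  then have "[j - Suc k..<j] = (j - Suc k) # [j - k..<j]"
    by (metis Suc_diff_Suc Suc_le_lessD diff_less_Suc upt_conv_Cons zero_less_Suc diff_less order_less_le_trans)
  with Suc show ?case by simp
qed

lemma cf_build: "cf (Suc n) (\<lambda>ys. F (hd ys) (tl ys)) \<Longrightarrow> cf n J
   \<Longrightarrow> cf n (\<lambda>xs. list_encode (map (\<lambda>i. F i xs) [0..<J xs]))"
proof -
  assume F: "cf (Suc n) (\<lambda>ys. F (hd ys) (tl ys))" and J: "cf n J"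
  have "cf (Suc (Suc n)) (\<lambda>ys. F (J (tl (tl ys)) - Suc (hd ys)) (tl (tl ys)))"
    by (rule cf_subst_hd[OF F]) (intro cf_intros cf_tl2 J)
  then have "cf (Suc (Suc n)) (\<lambda>ys. Suc (prod_encode (F (J (tl (tl ys)) - Suc (hd ys)) (tl (tl ys)), hd (tl ys))))"
    by (intro cf_Suc cf_penc cf_tl_hd)
  then have "cf n (\<lambda>xs. rec_nat 0 (\<lambda>k acc. Suc (prod_encode (F (J xs - Suc k) xs, acc))) (J xs))"
    by (intro cf_rec cf_const J) simp
  then show ?thesis
  proof (rule cf_cong)
    fix xs :: "nat list"
    show "rec_nat 0 (\<lambda>k acc. Suc (prod_encode (F (J xs - Suc k) xs, acc))) (J xs) =
          list_encode (map (\<lambda>i. F i xs) [0..<J xs])"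
      using rec_build[OF order_refl, where j="J xs" and F="\<lambda>i. F i xs"] by simp
  qed
qed

lemma cf_fun: "cf (Suc 0) (\<lambda>xs. a (hd xs)) \<Longrightarrow> cf n e \<Longrightarrow> cf n (\<lambda>xs. a (e xs))"
  using cf_comp[of "Suc 0" "\<lambda>xs. a (hd xs)" "[e]" n] by simp

lemma cp_even: "cf n f \<Longrightarrow> cp n (\<lambda>xs. even (f xs))"
proof -
  assume f: "cf n f"
  have "cp n (\<lambda>xs. f xs mod 2 = 0)" using f by (intro cp_eq cf_mod cf_const)
  then show ?thesis by (rule cp_cong) (simp add: even_iff_mod_2_eq_zero)
qed

lemma cf_min: "cf n f \<Longrightarrow> cf n g \<Longrightarrow> cf n (\<lambda>xs. min (f xs) (g xs))"
proof -
  assume "cf n f" "cf n g"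
  then have "cf n (\<lambda>xs. if f xs \<le> g xs then f xs else g xs)" by (intro cf_intros)
  then show ?thesis by (rule cf_cong) (simp add: min_def)
qed

definition vfun :: "nat \<Rightarrow> nat \<Rightarrow> nat \<Rightarrow> nat" where
  "vfun uc w i = (if even i then lnth uc (i div 2) else (w div 2 ^ (i div 2)) mod 2)"
definition Ecode :: "nat \<Rightarrow> nat \<Rightarrow> nat \<Rightarrow> nat \<Rightarrow> nat" where
  "Ecode n uc w j = list_encode ((n + 4) # map (vfun uc w) [0..<j])"
definition Jb :: "nat \<Rightarrow> nat \<Rightarrow> nat" where "Jb m L = 2 * min m L"
definition fin :: "(nat \<Rightarrow> nat) \<Rightarrow> nat \<Rightarrow> nat \<Rightarrow> nat \<Rightarrow> nat \<Rightarrow> nat \<Rightarrow> bool" where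
  "fin a n uc m L w = (\<exists>j<Suc (Jb m L). 0 < a (Ecode n uc w j))"
definition jw :: "(nat \<Rightarrow> nat) \<Rightarrow> nat \<Rightarrow> nat \<Rightarrow> nat \<Rightarrow> nat \<Rightarrow> nat \<Rightarrow> nat" where
  "jw a n uc m L w = (LEAST j. j = Jb m L \<or> 0 < a (Ecode n uc w j))"
definition cw :: "(nat \<Rightarrow> nat) \<Rightarrow> nat \<Rightarrow> nat \<Rightarrow> nat \<Rightarrow> nat \<Rightarrow> nat \<Rightarrow> nat" where
  "cw a n uc m L w = a (Ecode n uc w (jw a n uc m L w)) - 1"
definition okc :: "(nat \<Rightarrow> nat) \<Rightarrow> nat \<Rightarrow> nat \<Rightarrow> nat \<Rightarrow> bool" where
  "okc hh n k k' =
     (fst (prod_decode (hh (prod_encode (prod_encode (k, k'), n + 6)))) * 2 ^ (n + 6)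
      \<le> fst (prod_decode (snd (prod_decode (hh (prod_encode (prod_encode (k, k'), n + 6)))))) * 2 ^ (n + 6)
        + 9 * (snd (prod_decode (snd (prod_decode (hh (prod_encode (prod_encode (k, k'), n + 6)))))) + 1))"
definition bitS :: "nat \<Rightarrow> nat \<Rightarrow> bool" where "bitS Sm w = ((Sm div 2 ^ w) mod 2 = 1)"
definition Lt :: "nat \<Rightarrow> nat" where "Lt t = fst (prod_decode t)"
definition St :: "nat \<Rightarrow> nat" where "St t = snd (prod_decode t)"
definition succ :: "(nat \<Rightarrow> nat) \<Rightarrow> (nat \<Rightarrow> nat) \<Rightarrow> nat \<Rightarrow> nat \<Rightarrow> nat \<Rightarrow> nat \<Rightarrow> bool" where
  "succ a hh n uc m t =
    (2 ^ Lt t < 2 * (\<Sum>w<2 ^ Lt t. (St t div 2 ^ w) mod 2) \<and>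
     (\<forall>w<2 ^ Lt t. bitS (St t) w \<longrightarrow> fin a n uc m (Lt t) w) \<and>
     (\<forall>w<2 ^ Lt t. \<forall>w'<2 ^ Lt t. bitS (St t) w \<and> bitS (St t) w' \<longrightarrow>
         okc hh n (cw a n uc m (Lt t) w) (cw a n uc m (Lt t) w')))"
definition outv :: "(nat \<Rightarrow> nat) \<Rightarrow> nat \<Rightarrow> nat \<Rightarrow> nat \<Rightarrow> nat \<Rightarrow> nat" where
  "outv a n uc m t = cw a n uc m (Lt t) (LEAST w. w = 2 ^ Lt t \<or> bitS (St t) w)"
definition tz :: "(nat \<Rightarrow> nat) \<Rightarrow> (nat \<Rightarrow> nat) \<Rightarrow> nat \<Rightarrow> nat \<Rightarrow> nat \<Rightarrow> nat" where
  "tz a hh n uc m = (LEAST t. t = m \<or> succ a hh n uc m t)"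
definition bfun :: "(nat \<Rightarrow> nat) \<Rightarrow> (nat \<Rightarrow> nat) \<Rightarrow> nat \<Rightarrow> nat" where
  "bfun a hh x = (if tz a hh (lhd x) (ltl x) (llen (ltl x)) < llen (ltl x)
       then Suc (outv a (lhd x) (ltl x) (llen (ltl x)) (tz a hh (lhd x) (ltl x) (llen (ltl x)))) else 0)"

lemma cf_vfun: "cf n e1 \<Longrightarrow> cf n e2 \<Longrightarrow> cf n e3 \<Longrightarrow> cf n (\<lambda>xs. vfun (e1 xs) (e2 xs) (e3 xs))"
  unfolding vfun_def by (intro cf_intros cp_even cf_lnth cf_div cf_mod)

lemma cf_Ecode: "cf n e1 \<Longrightarrow> cf n e2 \<Longrightarrow> cf n e3 \<Longrightarrow> cf n e4 \<Longrightarrow>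
    cf n (\<lambda>xs. Ecode (e1 xs) (e2 xs) (e3 xs) (e4 xs))"
proof -
  assume a: "cf n e1" "cf n e2" "cf n e3" "cf n e4"
  have "cf n (\<lambda>xs. Suc (prod_encode (e1 xs + 4, list_encode (map (\<lambda>i. vfun (e2 xs) (e3 xs) i) [0..<e4 xs]))))"
    using a by (intro cf_Suc cf_penc cf_add cf_const cf_build cf_vfun cf_tl1 cf_hd)
  then show ?thesis by (rule cf_cong) (simp add: Ecode_def)
qed

lemma cf_Jb: "cf n e1 \<Longrightarrow> cf n e2 \<Longrightarrow> cf n (\<lambda>xs. Jb (e1 xs) (e2 xs))"
  unfolding Jb_def by (intro cf_intros cf_min)

context
  fixes a hh :: "nat \<Rightarrow> nat"
  assumes ca: "cf (Suc 0) (\<lambda>xs. a (hd xs))" and ch: "cf (Suc 0) (\<lambda>xs. hh (hd xs))"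
begin

lemma cf_a: "cf n e \<Longrightarrow> cf n (\<lambda>xs. a (e xs))" using cf_fun[OF ca] .
lemma cf_hh: "cf n e \<Longrightarrow> cf n (\<lambda>xs. hh (e xs))" using cf_fun[OF ch] .

lemma cp_fin: "cf n e1 \<Longrightarrow> cf n e2 \<Longrightarrow> cf n e3 \<Longrightarrow> cf n e4 \<Longrightarrow> cf n e5 \<Longrightarrow>
    cp n (\<lambda>xs. fin a (e1 xs) (e2 xs) (e3 xs) (e4 xs) (e5 xs))"
  unfolding fin_def by (intro cf_intros cf_a cf_Ecode cf_Jb cf_tl1)

lemma cf_cw: "cf n e1 \<Longrightarrow> cf n e2 \<Longrightarrow> cf n e3 \<Longrightarrow> cf n e4 \<Longrightarrow> cf n e5 \<Longrightarrow>
    cf n (\<lambda>xs. cw a (e1 xs) (e2 xs) (e3 xs) (e4 xs) (e5 xs))"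
  unfolding cw_def jw_def by (intro cf_intros cf_a cf_Ecode cf_Jb cf_tl1)

lemma cp_okc: "cf n e1 \<Longrightarrow> cf n e2 \<Longrightarrow> cf n e3 \<Longrightarrow> cp n (\<lambda>xs. okc hh (e1 xs) (e2 xs) (e3 xs))"
  unfolding okc_def by (intro cf_intros cf_hh cf_pd1 cf_pd2 cf_penc)

lemma cp_bitS: "cf n e1 \<Longrightarrow> cf n e2 \<Longrightarrow> cp n (\<lambda>xs. bitS (e1 xs) (e2 xs))"
  unfolding bitS_def by (intro cf_intros cf_mod cf_div)

lemma cf_Lt: "cf n e \<Longrightarrow> cf n (\<lambda>xs. Lt (e xs))" unfolding Lt_def by (rule cf_pd1)
lemma cf_St: "cf n e \<Longrightarrow> cf n (\<lambda>xs. St (e xs))" unfolding St_def by (rule cf_pd2)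

lemma cp_succ: "cf n e1 \<Longrightarrow> cf n e2 \<Longrightarrow> cf n e3 \<Longrightarrow> cf n e4 \<Longrightarrow>
    cp n (\<lambda>xs. succ a hh (e1 xs) (e2 xs) (e3 xs) (e4 xs))"
  unfolding succ_def by (intro cf_intros cf_Lt cf_St cp_bitS cp_fin cp_okc cf_cw cf_mod cf_div cf_tl1)

lemma cf_outv: "cf n e1 \<Longrightarrow> cf n e2 \<Longrightarrow> cf n e3 \<Longrightarrow> cf n e4 \<Longrightarrow>
    cf n (\<lambda>xs. outv a (e1 xs) (e2 xs) (e3 xs) (e4 xs))"
  unfolding outv_def by (intro cf_intros cf_Lt cf_St cp_bitS cf_cw cf_tl1)

lemma cf_tz: "cf n e1 \<Longrightarrow> cf n e2 \<Longrightarrow> cf n e3 \<Longrightarrow>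
    cf n (\<lambda>xs. tz a hh (e1 xs) (e2 xs) (e3 xs))"
  unfolding tz_def by (intro cf_intros cp_succ cf_tl1)

lemma tc_bfun: "total_computable (bfun a hh)"
proof (rule total_computable_cf)
  have "cf (Suc 0) (\<lambda>xs. bfun a hh (hd xs))"
    unfolding bfun_def by (intro cf_intros cf_tz cf_outv cf_lhd cf_ltl cf_llen)
  then show "cf 1 (\<lambda>xs. bfun a hh (hd xs))" by simp
qed

end

definition bl :: "nat \<Rightarrow> nat \<Rightarrow> bool list" where "bl L w = map (\<lambda>i. odd (w div 2 ^ i)) [0..<L]"
definition cylw :: "bool list \<Rightarrow> (nat \<Rightarrow> bool) set" where "cylw v = {q. map q [0..<length v] = v}"

lemma length_bl[simp]: "length (bl L w) = L" by (simp add: bl_def)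

lemma bits_eq:
  assumes "w < 2 ^ L" "w' < 2 ^ L" "bl L w = bl L w'"
  shows "w = (w'::nat)"
proof (rule bit_eqI)
  fix i
  show "bit w i = bit w' i"
  proof (cases "i < L")
    case True
    then have "odd (w div 2 ^ i) = odd (w' div 2 ^ i)"
      using arg_cong[OF assms(3), of "\<lambda>v. v ! i"] by (simp add: bl_def)
    then show ?thesis by (simp add: bit_iff_odd)
  next
    case False
    then have "(2::nat) ^ L \<le> 2 ^ i" by simp
    then have "w < 2 ^ i" "w' < 2 ^ i" using assms(1,2) by linarith+
    then have "w div 2 ^ i = 0" "w' div 2 ^ i = 0" by auto
    then show ?thesis by (simp add: bit_iff_odd)
  qed
qed

lemma inj_bl: "inj_on (bl L) {..<2 ^ L}"
  by (rule inj_onI) (auto intro: bits_eq)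

lemma image_bl: "bl L ` {..<2 ^ L} = {v. length v = L}"
proof (rule card_subset_eq)
  have "{v. length v = L} = {xs. set xs \<subseteq> (UNIV::bool set) \<and> length xs = L}" by simp
  then show "finite {v::bool list. length v = L}" "card (bl L ` {..<2 ^ L}) = card {v::bool list. length v = L}"
    using card_lists_length_eq[of "UNIV::bool set" L] finite_lists_length_eq[of "UNIV::bool set" L]
      card_image[OF inj_bl[of L]] by auto
  show "bl L ` {..<2 ^ L} \<subseteq> {v. length v = L}" by auto
qed

lemma bl_surj: "length v = L \<Longrightarrow> \<exists>w<2 ^ L. bl L w = v"
  using image_bl[of L] by (metis (mono_tags, lifting) imageE lessThan_iff mem_Collect_eq)

lemma cm_prob: "prob_space cantor_measure"
  unfolding cantor_measure_def by (rule prob_space_PiM) (rule prob_space_measure_pmf)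

lemma cm_space: "space cantor_measure = UNIV"
  by (auto simp: cantor_measure_def space_PiM)

lemma cylw_iff: "q \<in> cylw v \<longleftrightarrow> (\<forall>i<length v. q i = v ! i)"
proof
  assume "q \<in> cylw v" then have e: "map q [0..<length v] = v" by (simp add: cylw_def)
  show "\<forall>i<length v. q i = v!i"
  proof (intro allI impI)
    fix i assume "i < length v"
    then show "q i = v!i" using arg_cong[OF e, of "\<lambda>l. l!i"] by simp
  qed
next
  assume h: "\<forall>i<length v. q i = v!i"
  have "map q [0..<length v] = v" by (rule nth_equalityI) (use h in simp_all)
  then show "q \<in> cylw v" by (simp add: cylw_def)
qed

lemma cylw_emb: "cylw v = prod_emb UNIV (\<lambda>_. measure_pmf (bernoulli_pmf (1/2))) {..<length v} (PiE {..<length v} (\<lambda>i. {v!i}))"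
proof (rule set_eqI)
  fix q :: "nat \<Rightarrow> bool"
  show "q \<in> cylw v \<longleftrightarrow> q \<in> prod_emb UNIV (\<lambda>_. measure_pmf (bernoulli_pmf (1/2))) {..<length v} (PiE {..<length v} (\<lambda>i. {v!i}))"
    unfolding cylw_iff by (auto simp: prod_emb_iff restrict_PiE_iff Pi_iff)
qed

lemma cylw_sets: "cylw v \<in> sets cantor_measure"
  unfolding cylw_emb cantor_measure_def 
  apply (rule sets_PiM_I)
  apply simp
  apply simp
  apply simp
  done

lemma cylw_emeasure: "emeasure cantor_measure (cylw v) = ennreal ((1/2) ^ length v)"
proof -
  have "emeasure cantor_measure (cylw v) = (\<Prod>i\<in>{..<length v}. emeasure (measure_pmf (bernoulli_pmf (1/2))) {v!i})"
    unfolding cylw_emb cantor_measure_def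
    apply (rule emeasure_PiM_emb)
    apply (rule prob_space_measure_pmf)
    apply simp
    apply simp
    apply simp
    done
  also have "\<dots> = (\<Prod>i\<in>{..<length v}. ennreal (1/2))"
    by (rule prod.cong) (simp_all add: emeasure_pmf_single)
  also have "\<dots> = ennreal (1/2) ^ length v"
    by (simp only: prod_constant card_lessThan)
  also have "\<dots> = ennreal ((1/2) ^ length v)"
    by (rule ennreal_power) simp
  finally show ?thesis .
qed

lemma cylw_measure: "measure cantor_measure (cylw v) = (1/2) ^ length v"
  unfolding measure_def cylw_emeasure by simp

lemma measure_cylU:
  assumes "finite V" "\<forall>v\<in>V. length v = L"
  shows "measure cantor_measure (\<Union>v\<in>V. cylw v) = card V * (1/2) ^ L"
proof -
  have "measure cantor_measure (\<Union>v\<in>V. cylw v) = (\<Sum>v\<in>V. measure cantor_measure (cylw v))"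
  proof (rule measure_finite_Union)
    show "disjoint_family_on cylw V"
      unfolding disjoint_family_on_def cylw_def using assms(2) by auto
    show "finite V" by (rule assms(1))
    show "cylw ` V \<subseteq> sets cantor_measure" using cylw_sets by blast
    show "emeasure cantor_measure (cylw v) \<noteq> \<infinity>" if "v \<in> V" for v
      by (simp add: cylw_emeasure)
  qed
  also have "\<dots> = card V * (1/2) ^ L" using assms(2) by (simp add: cylw_measure)
  finally show ?thesis .
qed

lemma finite_len: "finite {v::bool list. length v = n}"
  using finite_lists_length_eq[of "UNIV::bool set" n] by simp

lemma paths_eq: "paths T = (\<Inter>n. \<Union>v\<in>{v\<in>T. length v = n}. cylw v)"
  unfolding paths_def cylw_def by auto

lemma paths_sets: "paths T \<in> sets cantor_measure"
proof -
  have "(\<Union>v\<in>{v\<in>T. length v = n}. cylw v) \<in> sets cantor_measure" for n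
  proof (rule sets.finite_UN)
    show "finite {v \<in> T. length v = n}" by (rule finite_subset[OF _ finite_len[of n]]) blast
    show "cylw v \<in> sets cantor_measure" if "v \<in> {v \<in> T. length v = n}" for v by (rule cylw_sets)
  qed
  then have "(\<Inter>n\<in>UNIV. \<Union>v\<in>{v\<in>T. length v = n}. cylw v) \<in> sets cantor_measure"
    using sets.top[of cantor_measure] cm_space by (intro sets.countable_INT'') auto
  then show ?thesis unfolding paths_eq by simp
qed

lemma inter_nonempty:
  assumes "A \<in> sets cantor_measure" "B \<in> sets cantor_measure"
    "measure cantor_measure A > 1/2" "measure cantor_measure B > 1/2"
  shows "A \<inter> B \<noteq> {}"
proof
  assume d: "A \<inter> B = {}"
  interpret prob_space cantor_measure by (rule cm_prob)
  have "measure cantor_measure (A \<union> B) = measure cantor_measure A + measure cantor_measure B"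
    using assms(1,2) d by (rule finite_measure_Union)
  moreover have "measure cantor_measure (A \<union> B) \<le> 1" by (rule prob_le_1)
  ultimately show False using assms by simp
qed

lemma MC1:
  assumes "measure cantor_measure (paths T) > 1/2" "W \<subseteq> {..<2 ^ L}" "2 ^ L < 2 * card W"
  shows "\<exists>q\<in>paths T. \<exists>w\<in>W. bl L w = map q [0..<L]"
proof -
  have fW: "finite W" using assms(2) finite_subset by blast
  have cW: "card (bl L ` W) = card W" using card_image inj_on_subset[OF inj_bl assms(2)] by blast
  have e: "(\<Union>w\<in>W. cylw (bl L w)) = (\<Union>v\<in>bl L ` W. cylw v)" by auto
  have m: "measure cantor_measure (\<Union>w\<in>W. cylw (bl L w)) = card W * (1/2) ^ L"
    unfolding e by (subst measure_cylU) (use fW cW in auto)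
  have "(card W :: real) * (1/2) ^ L > 1/2"
  proof -
    have "real (2 ^ L) < 2 * real (card W)" using assms(3) by linarith
    then have "(2::real) ^ L < 2 * card W" by simp
    then have "(2::real) ^ L * (1/2)^L < 2 * card W * (1/2)^L" by (intro mult_strict_right_mono) auto
    moreover have "(2::real) ^ L * (1/2)^L = 1" by (simp add: power_mult_distrib[symmetric])
    ultimately show ?thesis by linarith
  qed
  moreover have "(\<Union>w\<in>W. cylw (bl L w)) \<in> sets cantor_measure"
    by (rule sets.finite_UN[OF fW]) (rule cylw_sets)
  ultimately have "paths T \<inter> (\<Union>w\<in>W. cylw (bl L w)) \<noteq> {}"
    using inter_nonempty[OF paths_sets _ assms(1)] m by simp
  then obtain q w where q: "q \<in> paths T" "w \<in> W" "q \<in> cylw (bl L w)" by blast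
  then have "bl L w = map q [0..<L]" by (simp add: cylw_def)
  with q(1,2) show ?thesis by blast
qed

lemma MC2:
  assumes "measure cantor_measure (paths T) > 1/2"
  shows "2 ^ L < 2 * card {w. w < 2 ^ L \<and> (\<exists>q\<in>paths T. bl L w = map q [0..<L])}"
proof -
  define W where "W = {w. w < 2 ^ L \<and> (\<exists>q\<in>paths T. bl L w = map q [0..<L])}"
  have W: "W \<subseteq> {..<2 ^ L}" unfolding W_def by auto
  have fW: "finite W" using W finite_subset by blast
  have cW: "card (bl L ` W) = card W" using card_image inj_on_subset[OF inj_bl W] by blast
  have sub: "paths T \<subseteq> (\<Union>v\<in>bl L ` W. cylw v)"
  proof
    fix q assume q: "q \<in> paths T"
    obtain w where "w < 2 ^ L" "bl L w = map q [0..<L]" using bl_surj[of "map q [0..<L]" L] by auto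
    with q show "q \<in> (\<Union>v\<in>bl L ` W. cylw v)" unfolding W_def cylw_def by auto
  qed
  interpret prob_space cantor_measure by (rule cm_prob)
  have "measure cantor_measure (paths T) \<le> measure cantor_measure (\<Union>v\<in>bl L ` W. cylw v)"
    by (rule finite_measure_mono[OF sub]) (rule sets.finite_UN, use fW in simp, rule cylw_sets)
  also have "\<dots> = card W * (1/2) ^ L" by (subst measure_cylU) (use fW cW in auto)
  finally have "1/2 < (card W :: real) * (1/2) ^ L" using assms by simp
  then have "(2::real) ^ L * (1/2) < 2 ^ L * (card W * (1/2) ^ L)" by (intro mult_strict_left_mono) auto
  moreover have "(2::real) ^ L * (card W * (1/2) ^ L) = card W"
    by (simp add: power_mult_distrib[symmetric] mult.assoc[symmetric] mult.commute[of "(2::real)^L"])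
  ultimately have "(2::real) ^ L < 2 * card W" by linarith
  then have "real (2 ^ L) < real (2 * card W)" by simp
  then show ?thesis unfolding W_def[symmetric] by linarith
qed

lemma map_upt_mono: "L1 \<le> L \<Longrightarrow> map q [0..<L] = map q [0..<L1] @ map q [L1..<L]"
  by (metis le_add_diff_inverse map_append upt_add_eq_append zero_le)

lemma koenig:
  fixes D :: "bool list \<Rightarrow> bool"
  assumes mono: "\<And>v u. D v \<Longrightarrow> D (v @ u)"
    and nf: "\<And>L. \<exists>q\<in>paths T. \<not> D (map q [0..<L])"
  shows "\<exists>q\<in>paths T. \<forall>L. \<not> D (map q [0..<L])"
proof -
  define good where "good v \<longleftrightarrow> (\<forall>L\<ge>length v. \<exists>q\<in>paths T. map q [0..<length v] = v \<and> \<not> D (map q [0..<L]))" for v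
  have Dm: "D (map q [0..<L])" if "D (map q [0..<L1])" "L1 \<le> L" for q L L1
    using mono[OF that(1), of "map q [L1..<L]"] map_upt_mono[OF that(2), of q] by simp
  have g0: "good []" unfolding good_def using nf by simp
  have step: "good (v @ [False]) \<or> good (v @ [True])" if gv: "good v" for v
  proof (rule ccontr)
    assume "\<not> (good (v @ [False]) \<or> good (v @ [True]))"
    then obtain L0 L1 where L0: "L0 \<ge> Suc (length v)" "\<forall>q\<in>paths T. map q [0..<Suc (length v)] = v @ [False] \<longrightarrow> D (map q [0..<L0])"
      and L1: "L1 \<ge> Suc (length v)" "\<forall>q\<in>paths T. map q [0..<Suc (length v)] = v @ [True] \<longrightarrow> D (map q [0..<L1])"
      unfolding good_def by auto
    define L where "L = max L0 L1"
    have "L \<ge> length v" using L0 unfolding L_def by simp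
    then obtain q where q: "q \<in> paths T" "map q [0..<length v] = v" "\<not> D (map q [0..<L])"
      using gv unfolding good_def by blast
    have e: "map q [0..<Suc (length v)] = v @ [q (length v)]" using q(2) by simp
    show False
    proof (cases "q (length v)")
      case True
      then have "D (map q [0..<L1])" using L1(2) q(1) e by auto
      then show False using Dm[of q L1 L] q(3) unfolding L_def by simp
    next
      case False
      then have "D (map q [0..<L0])" using L0(2) q(1) e by auto
      then show False using Dm[of q L0 L] q(3) unfolding L_def by simp
    qed
  qed
  define nxt where "nxt v = (if good (v @ [False]) then v @ [False] else v @ [True])" for v
  define pre where "pre k = rec_nat [] (\<lambda>_ v. nxt v) k" for k
  have pre_Suc: "pre (Suc k) = nxt (pre k)" for k unfolding pre_def by simp
  have pre0: "pre 0 = []" unfolding pre_def by simp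
  have gpre: "good (pre k)" for k
    by (induction k) (use g0 step in \<open>auto simp: pre0 pre_Suc nxt_def\<close>)
  have lpre: "length (pre k) = k" for k
    by (induction k) (auto simp: pre0 pre_Suc nxt_def)
  define qs where "qs i = pre (Suc i) ! i" for i
  have mq: "map qs [0..<k] = pre k" for k
  proof (induction k)
    case 0 then show ?case by (simp add: pre0)
  next
    case (Suc k)
    obtain b where b: "pre (Suc k) = pre k @ [b]" using pre_Suc[of k] unfolding nxt_def by (auto split: if_splits)
    then have "qs k = b" unfolding qs_def using lpre[of k] by (simp add: nth_append)
    then show ?case using Suc b by simp
  qed
  have "qs \<in> paths T"
    unfolding paths_def
  proof (safe)
    fix n
    obtain q where q: "q \<in> paths T" "map q [0..<n] = pre n"
      using gpre[of n] lpre[of n] unfolding good_def by auto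
    have "map q [0..<n] \<in> T" using q(1) unfolding paths_def by blast
    then show "map qs [0..<n] \<in> T" using mq[of n] q(2) by simp
  qed
  moreover have "\<not> D (map qs [0..<L])" for L
  proof -
    obtain q where "q \<in> paths T" "map q [0..<L] = pre L" "\<not> D (map q [0..<L])"
      using gpre[of L] lpre[of L] unfolding good_def by auto
    then show ?thesis using mq[of L] by simp
  qed
  ultimately show ?thesis by blast
qed

definition nm :: "(nat \<Rightarrow> bool) \<Rightarrow> nat \<Rightarrow> nat" where "nm q i = (if q i then 1 else 0)"

lemma cantor_rep_nm: "cantor_rep (nm q) = Some q"
  unfolding cantor_rep_def nm_def by auto

lemma ka_some:
  assumes "kleene_app a P = Some r"
  shows "\<exists>m. k2_found a P n m"
    and "r n = a (list_encode (n # map P [0..<(LEAST m. k2_found a P n m)])) - 1"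
  using assms unfolding kleene_app_def by (auto split: if_splits)

lemma ka_intro:
  assumes "\<And>n. \<exists>m. k2_found a P n m"
  shows "kleene_app a P = Some (\<lambda>n. a (list_encode (n # map P [0..<(LEAST m. k2_found a P n m)])) - 1)"
  using assms unfolding kleene_app_def by auto

lemma cauchy_dist:
  assumes "cauchy_rep s r = Some y"
  shows "dist (s (r i)) y \<le> (1/2) ^ i"
proof -
  have c: "\<forall>i j. i < j \<longrightarrow> dist (s (r i)) (s (r j)) < (1/2) ^ i" and ex: "\<exists>y. (\<lambda>n. s (r n)) \<longlonglongrightarrow> y"
    and y: "y = lim (\<lambda>n. s (r n))"
    using assms unfolding cauchy_rep_def by (auto split: if_splits)
  have t: "(\<lambda>n. s (r n)) \<longlonglongrightarrow> y" using ex y by (auto simp: limI)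
  have "(\<lambda>j. dist (s (r i)) (s (r j))) \<longlonglongrightarrow> dist (s (r i)) y"
    by (intro tendsto_dist tendsto_const t)
  moreover have "\<forall>\<^sub>F j in sequentially. dist (s (r i)) (s (r j)) \<le> (1/2) ^ i"
    using c by (auto intro!: eventually_sequentiallyI[of "Suc i"] less_imp_le)
  ultimately show ?thesis by (rule tendsto_upperbound) simp
qed

lemma rat_eq: "rat_of_code c = (real (fst (prod_decode c)) - real (fst (prod_decode (snd (prod_decode c)))))
     / (real (snd (prod_decode (snd (prod_decode c)))) + 1)"
  by (simp add: rat_of_code_def Let_def split_beta)

context
  fixes s :: "nat \<Rightarrow> 'b::metric_space" and hh :: "nat \<Rightarrow> nat"
  assumes hp: "\<forall>i j n. \<bar>dist (s i) (s j) - rat_of_code (hh (prod_encode (prod_encode (i, j), n)))\<bar> \<le> (1/2) ^ n"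
begin

lemma okc_sound:
  assumes "okc hh n k k'"
  shows "dist (s k) (s k') \<le> 10 / 2 ^ (n + 6)"
proof -
  define c where "c = hh (prod_encode (prod_encode (k, k'), n + 6))"
  define A where "A = fst (prod_decode c)"
  define B where "B = fst (prod_decode (snd (prod_decode c)))"
  define C where "C = snd (prod_decode (snd (prod_decode c)))"
  define N where "N = n + 6"
  have "A * 2 ^ N \<le> B * 2 ^ N + 9 * (C + 1)"
    using assms unfolding okc_def A_def B_def C_def c_def N_def by simp
  then have "real (A * 2 ^ N) \<le> real (B * 2 ^ N + 9 * (C + 1))" by (simp only: of_nat_le_iff)
  then have le: "(real A - real B) * 2 ^ N \<le> 9 * (real C + 1)" by (simp add: algebra_simps)
  have r: "rat_of_code c = (real A - real B) / (real C + 1)" unfolding rat_eq A_def B_def C_def ..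
  have pos: "real C + 1 > 0" by simp
  have "rat_of_code c * 2 ^ N \<le> 9"
    unfolding r using le pos by (simp add: field_simps)
  then have r9: "rat_of_code c \<le> 9 / 2 ^ N" by (simp add: field_simps)
  have "\<bar>dist (s k) (s k') - rat_of_code c\<bar> \<le> (1/2) ^ N" using hp unfolding c_def N_def by blast
  then have "dist (s k) (s k') \<le> rat_of_code c + 1 / 2 ^ N" by (simp add: power_one_over)
  also have "\<dots> \<le> 9 / 2 ^ N + 1 / 2 ^ N" using r9 by simp
  also have "\<dots> = 10 / 2 ^ N" by (simp add: field_simps)
  finally show ?thesis unfolding N_def .
qed

lemma okc_complete:
  assumes "dist (s k) (s k') \<le> 8 / 2 ^ (n + 6)"
  shows "okc hh n k k'"
proof -
  define c where "c = hh (prod_encode (prod_encode (k, k'), n + 6))"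
  define A where "A = fst (prod_decode c)"
  define B where "B = fst (prod_decode (snd (prod_decode c)))"
  define C where "C = snd (prod_decode (snd (prod_decode c)))"
  define N where "N = n + 6"
  have r: "rat_of_code c = (real A - real B) / (real C + 1)" unfolding rat_eq A_def B_def C_def ..
  have pos: "real C + 1 > 0" by simp
  have "\<bar>dist (s k) (s k') - rat_of_code c\<bar> \<le> (1/2) ^ N" using hp unfolding c_def N_def by blast
  then have "rat_of_code c \<le> dist (s k) (s k') + 1 / 2 ^ N" by (simp add: power_one_over)
  also have "\<dots> \<le> 8 / 2 ^ N + 1 / 2 ^ N" using assms unfolding N_def by simp
  also have "\<dots> = 9 / 2 ^ N" by (simp add: field_simps)
  finally have "rat_of_code c * 2 ^ N \<le> 9" by (simp add: field_simps)
  then have "(real A - real B) * 2 ^ N \<le> 9 * (real C + 1)"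
    unfolding r using pos by (simp add: field_simps)
  then have "real (A * 2 ^ N) \<le> real (B * 2 ^ N + 9 * (C + 1))" by (simp add: algebra_simps)
  then have "A * 2 ^ N \<le> B * 2 ^ N + 9 * (C + 1)" by (simp only: of_nat_le_iff)
  then show ?thesis unfolding okc_def A_def B_def C_def c_def N_def by simp
qed
end

lemma vfun_bpair:
  assumes "bl L w = map q [0..<L]" "i < Jb m L"
  shows "vfun (list_encode (map p [0..<m])) w i = bpair p (nm q) i"
proof (cases "even i")
  case True
  then have "i div 2 < m" using assms(2) unfolding Jb_def by auto
  then show ?thesis using True unfolding vfun_def bpair_def by (simp add: lnth_enc)
next
  case False
  then have l: "i div 2 < L" using assms(2) unfolding Jb_def by auto
  then have "odd (w div 2 ^ (i div 2)) = q (i div 2)"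
    using arg_cong[OF assms(1), of "\<lambda>v. v ! (i div 2)"] by (simp add: bl_def)
  then show ?thesis using False unfolding vfun_def bpair_def nm_def
    by (auto simp: odd_iff_mod_2_eq_one even_iff_mod_2_eq_zero)
qed

lemma Ecode_eq:
  assumes "bl L w = map q [0..<L]" "j \<le> Jb m L"
  shows "Ecode n (list_encode (map p [0..<m])) w j = list_encode ((n + 4) # map (bpair p (nm q)) [0..<j])"
proof -
  have e: "map (vfun (list_encode (map p [0..<m])) w) [0..<j] = map (bpair p (nm q)) [0..<j]"
  proof (rule map_cong)
    fix i assume "i \<in> set [0..<j]"
    then have "i < Jb m L" using assms(2) by auto
    then show "vfun (list_encode (map p [0..<m])) w i = bpair p (nm q) i" by (rule vfun_bpair[OF assms(1)])
  qed simp
  show ?thesis unfolding Ecode_def e ..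
qed

lemma cw_eq:
  assumes ka: "kleene_app a (bpair p (nm q)) = Some r"
    and bl: "bl L w = map q [0..<L]"
    and fin: "fin a n (list_encode (map p [0..<m])) m L w"
  shows "cw a n (list_encode (map p [0..<m])) m L w = r (n + 4)"
proof -
  let ?P = "bpair p (nm q)"
  let ?uc = "list_encode (map p [0..<m])"
  obtain j where j: "j < Suc (Jb m L)" "0 < a (Ecode n ?uc w j)" using fin unfolding fin_def by auto
  have fj: "k2_found a ?P (n + 4) j" using j Ecode_eq[OF bl, of j m n p] unfolding k2_found_def by simp
  define j0 where "j0 = (LEAST m. k2_found a ?P (n + 4) m)"
  have j0j: "j0 \<le> j" unfolding j0_def using fj by (rule Least_le)
  have fj0: "k2_found a ?P (n + 4) j0" unfolding j0_def using fj by (rule LeastI)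
  have "jw a n ?uc m L w = j0"
    unfolding jw_def
  proof (rule Least_equality)
    show "j0 = Jb m L \<or> 0 < a (Ecode n ?uc w j0)"
      using fj0 Ecode_eq[OF bl, of j0 m n p] j0j j unfolding k2_found_def by simp
    fix y assume y: "y = Jb m L \<or> 0 < a (Ecode n ?uc w y)"
    show "j0 \<le> y"
    proof (cases "y \<le> Jb m L")
      case True
      show ?thesis
      proof (cases "y = Jb m L")
        case True then show ?thesis using j0j j by simp
      next
        case False
        then have "k2_found a ?P (n + 4) y" using y True Ecode_eq[OF bl, of y m n p] unfolding k2_found_def by simp
        then show ?thesis unfolding j0_def by (rule Least_le)
      qed
    next
      case False then show ?thesis using j0j j by simp
    qed
  qed
  then have "cw a n ?uc m L w = a (Ecode n ?uc w j0) - 1" unfolding cw_def by simp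
  also have "\<dots> = a (list_encode ((n + 4) # map ?P [0..<j0])) - 1"
    using Ecode_eq[OF bl, of j0 m n p] j0j j by simp
  also have "\<dots> = r (n + 4)" using ka_some(2)[OF ka, of "n + 4"] unfolding j0_def by simp
  finally show ?thesis .
qed

lemma bitS_iff: "bitS Sm w \<longleftrightarrow> bit Sm w"
  unfolding bitS_def by (simp add: bit_iff_odd odd_iff_mod_2_eq_one)

lemma sum_bits_card: "(\<Sum>w<N. (Sm div 2 ^ w) mod 2) = card {w. w < N \<and> bitS Sm w}"
proof -
  have "(\<Sum>w<N. (Sm div 2 ^ w) mod 2) = (\<Sum>w\<in>{..<N}. if bitS Sm w then 1 else 0)"
    by (rule sum.cong) (auto simp: bitS_def)
  also have "\<dots> = (\<Sum>w\<in>{w\<in>{..<N}. bitS Sm w}. 1)"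
    by (rule sum.inter_filter[symmetric]) simp
  also have "\<dots> = card {w. w < N \<and> bitS Sm w}" by simp
  finally show ?thesis .
qed

definition mask :: "nat \<Rightarrow> nat set \<Rightarrow> nat" where
  "mask N W = horner_sum of_bool 2 (map (\<lambda>w. w \<in> W) [0..<N])"

lemma bitS_mask: "bitS (mask N W) v \<longleftrightarrow> v < N \<and> v \<in> W"
  unfolding bitS_iff mask_def by (auto simp add: bit_horner_sum_bit_iff)

context
  fixes s :: "nat \<Rightarrow> 'b::metric_space" and hh aH :: "nat \<Rightarrow> nat" and p :: baire and fx :: 'b and T
  assumes hp: "\<forall>i j n. \<bar>dist (s i) (s j) - rat_of_code (hh (prod_encode (prod_encode (i, j), n)))\<bar> \<le> (1/2) ^ n"
    and meas: "measure cantor_measure (paths T) > 1/2"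
    and good: "\<forall>q\<in>paths T. \<exists>r. kleene_app aH (bpair p (nm q)) = Some r \<and> cauchy_rep s r = Some fx"
begin

lemma succ_correct:
  assumes sc: "succ aH hh n (list_encode (map p [0..<m])) m t"
  shows "dist (s (outv aH n (list_encode (map p [0..<m])) m t)) fx \<le> 14 / 2 ^ (n + 6)"
proof -
  let ?uc = "list_encode (map p [0..<m])"
  define L where "L = Lt t"
  define Sm where "Sm = St t"
  define W where "W = {w. w < 2 ^ L \<and> bitS Sm w}"
  have cnt: "2 ^ L < 2 * card W" and fins: "\<And>w. w < 2 ^ L \<Longrightarrow> bitS Sm w \<Longrightarrow> fin aH n ?uc m L w"
    and oks: "\<And>w w'. w < 2 ^ L \<Longrightarrow> w' < 2 ^ L \<Longrightarrow> bitS Sm w \<Longrightarrow> bitS Sm w' \<Longrightarrow>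
         okc hh n (cw aH n ?uc m L w) (cw aH n ?uc m L w')"
    using sc unfolding succ_def L_def[symmetric] Sm_def[symmetric] W_def sum_bits_card by auto
  have WL: "W \<subseteq> {..<2 ^ L}" unfolding W_def by auto
  obtain q w where q: "q \<in> paths T" and w: "w \<in> W" and bl: "bl L w = map q [0..<L]"
    using MC1[OF meas WL cnt] by blast
  obtain r where r: "kleene_app aH (bpair p (nm q)) = Some r" "cauchy_rep s r = Some fx" using good q by blast
  have wl: "w < 2 ^ L" "bitS Sm w" using w unfolding W_def by auto
  have cwe: "cw aH n ?uc m L w = r (n + 4)" by (rule cw_eq[OF r(1) bl fins[OF wl]])
  define w0 where "w0 = (LEAST w'. w' = 2 ^ L \<or> bitS Sm w')"
  have w0w: "w0 \<le> w" unfolding w0_def by (rule Least_le) (use wl in simp)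
  have "w0 = 2 ^ L \<or> bitS Sm w0" unfolding w0_def by (rule LeastI[of _ w]) (use wl in simp)
  then have w0b: "bitS Sm w0" "w0 < 2 ^ L" using w0w wl by auto
  have ov: "outv aH n ?uc m t = cw aH n ?uc m L w0" unfolding outv_def w0_def L_def Sm_def ..
  have "dist (s (cw aH n ?uc m L w0)) (s (cw aH n ?uc m L w)) \<le> 10 / 2 ^ (n + 6)"
    by (rule okc_sound[OF hp oks[OF w0b(2) wl(1) w0b(1) wl(2)]])
  moreover have "dist (s (r (n + 4))) fx \<le> (1/2) ^ (n + 4)" by (rule cauchy_dist[OF r(2)])
  moreover have "(1/2::real) ^ (n + 4) = 4 / 2 ^ (n + 6)" by (simp add: power_one_over power_add)
  ultimately have "dist (s (cw aH n ?uc m L w0)) fx \<le> 10 / 2 ^ (n + 6) + 4 / 2 ^ (n + 6)"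
    using dist_triangle[of "s (cw aH n ?uc m L w0)" fx "s (cw aH n ?uc m L w)"] cwe by simp
  also have "\<dots> = 14 / 2 ^ (n + 6)" by (simp add: field_simps)
  finally show ?thesis unfolding ov .
qed

end

context
  fixes s :: "nat \<Rightarrow> 'b::metric_space" and hh aH :: "nat \<Rightarrow> nat" and p :: baire and fx :: 'b and T
  assumes hp: "\<forall>i j n. \<bar>dist (s i) (s j) - rat_of_code (hh (prod_encode (prod_encode (i, j), n)))\<bar> \<le> (1/2) ^ n"
    and meas: "measure cantor_measure (paths T) > 1/2"
    and good: "\<forall>q\<in>paths T. \<exists>r. kleene_app aH (bpair p (nm q)) = Some r \<and> cauchy_rep s r = Some fx"
begin

definition exv :: "bool list \<Rightarrow> nat \<Rightarrow> nat" where
  "exv v i = (if i < length v \<and> v ! i then 1 else 0)"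

lemma exv_app: "k < length v \<Longrightarrow> exv (v @ u) k = exv v k"
  by (simp add: exv_def nth_append)

lemma exv_map: "k < L \<Longrightarrow> exv (map q [0..<L]) k = nm q k"
  by (simp add: exv_def nm_def)

lemma agree_app:
  assumes "j \<le> 2 * length v"
  shows "map (bpair p (exv (v @ u))) [0..<j] = map (bpair p (exv v)) [0..<j]"
proof (rule map_cong[OF refl])
  fix i assume "i \<in> set [0..<j]"
  then have "i < length v * 2" using assms by simp
  then have "i div 2 < length v" by (rule less_mult_imp_div_less)
  then show "bpair p (exv (v @ u)) i = bpair p (exv v) i"
    unfolding bpair_def by (simp add: exv_app)
qed

lemma agree_q:
  assumes "j \<le> 2 * L"
  shows "map (bpair p (exv (map q [0..<L]))) [0..<j] = map (bpair p (nm q)) [0..<j]"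
proof (rule map_cong[OF refl])
  fix i assume "i \<in> set [0..<j]"
  then have "i < L * 2" using assms by simp
  then have "i div 2 < L" by (rule less_mult_imp_div_less)
  then show "bpair p (exv (map q [0..<L])) i = bpair p (nm q) i"
    unfolding bpair_def by (simp add: exv_map)
qed

definition Dp :: "nat \<Rightarrow> bool list \<Rightarrow> bool" where
  "Dp n v \<longleftrightarrow> (\<exists>j\<le>2 * length v. 0 < aH (list_encode ((n + 4) # map (bpair p (exv v)) [0..<j])))"

lemma uniform_L:
  "\<exists>L. \<forall>q\<in>paths T. \<exists>j\<le>2 * L. 0 < aH (list_encode ((n + 4) # map (bpair p (nm q)) [0..<j]))"
proof -
  define D where "D = Dp n"
  have mono: "D (v @ u)" if Dv: "D v" for v u
  proof -
    obtain j where j1: "j \<le> 2 * length v" and j2: "0 < aH (list_encode ((n + 4) # map (bpair p (exv v)) [0..<j]))"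
      using Dv unfolding D_def Dp_def by blast
    have e: "map (bpair p (exv (v @ u))) [0..<j] = map (bpair p (exv v)) [0..<j]" using j1 by (rule agree_app)
    show ?thesis unfolding D_def Dp_def
    proof (intro exI[of _ j] conjI)
      show "j \<le> 2 * length (v @ u)" using j1 by simp
      show "0 < aH (list_encode ((n + 4) # map (bpair p (exv (v @ u))) [0..<j]))" unfolding e by (rule j2)
    qed
  qed
  have Dq: "D (map q [0..<L]) \<longleftrightarrow> (\<exists>j\<le>2 * L. 0 < aH (list_encode ((n + 4) # map (bpair p (nm q)) [0..<j])))" for q L
  proof
    assume "D (map q [0..<L])"
    then obtain j where j: "j \<le> 2 * L" "0 < aH (list_encode ((n + 4) # map (bpair p (exv (map q [0..<L]))) [0..<j]))"
      unfolding D_def Dp_def length_map length_upt diff_zero by blast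
    have e: "map (bpair p (exv (map q [0..<L]))) [0..<j] = map (bpair p (nm q)) [0..<j]" using j(1) by (rule agree_q)
    show "\<exists>j\<le>2 * L. 0 < aH (list_encode ((n + 4) # map (bpair p (nm q)) [0..<j]))"
      using j(2) unfolding e using j(1) by blast
  next
    assume "\<exists>j\<le>2 * L. 0 < aH (list_encode ((n + 4) # map (bpair p (nm q)) [0..<j]))"
    then obtain j where j: "j \<le> 2 * L" "0 < aH (list_encode ((n + 4) # map (bpair p (nm q)) [0..<j]))"
      by blast
    have e: "map (bpair p (exv (map q [0..<L]))) [0..<j] = map (bpair p (nm q)) [0..<j]" using j(1) by (rule agree_q)
    have "0 < aH (list_encode ((n + 4) # map (bpair p (exv (map q [0..<L]))) [0..<j]))"
      unfolding e by (rule j(2))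
    then show "D (map q [0..<L])"
      unfolding D_def Dp_def length_map length_upt diff_zero using j(1) by blast
  qed
  show ?thesis
  proof (rule ccontr)
    assume nt: "\<not> ?thesis"
    have ne: "\<exists>q\<in>paths T. \<not> D (map q [0..<L])" for L
    proof -
      have "\<not> (\<forall>q\<in>paths T. \<exists>j\<le>2 * L. 0 < aH (list_encode ((n + 4) # map (bpair p (nm q)) [0..<j])))"
        by (rule contrapos_nn[OF nt]) (rule exI)
      then obtain q where q: "q \<in> paths T" "\<not> (\<exists>j\<le>2 * L. 0 < aH (list_encode ((n + 4) # map (bpair p (nm q)) [0..<j])))"
        by blast
      have "\<not> D (map q [0..<L])" using q(2) Dq[of q L] by simp
      with q(1) show ?thesis by blast
    qed
    have "\<exists>q\<in>paths T. \<forall>L. \<not> D (map q [0..<L])"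
      using koenig[of D T, OF mono ne] .
    then obtain q where q: "q \<in> paths T" "\<And>L. \<not> D (map q [0..<L])" by blast
    obtain r where r: "kleene_app aH (bpair p (nm q)) = Some r" using good q(1) by blast
    obtain j where j: "k2_found aH (bpair p (nm q)) (n + 4) j" using ka_some(1)[OF r] by blast
    have "\<exists>j'\<le>2 * j. 0 < aH (list_encode ((n + 4) # map (bpair p (nm q)) [0..<j']))"
      using j unfolding k2_found_def by (intro exI[of _ j]) simp
    then have "D (map q [0..<j])" using Dq[of q j] by simp
    then show False using q(2) by blast
  qed
qed

lemma succ_exists: "\<exists>m. \<exists>t<m. succ aH hh n (list_encode (map p [0..<m])) m t"
proof -
  obtain L where L: "\<And>q. q \<in> paths T \<Longrightarrow> \<exists>j\<le>2 * L. 0 < aH (list_encode ((n + 4) # map (bpair p (nm q)) [0..<j]))"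
    using uniform_L by blast
  define W where "W = {w. w < 2 ^ L \<and> (\<exists>q\<in>paths T. bl L w = map q [0..<L])}"
  define Sm where "Sm = mask (2 ^ L) W"
  define t where "t = prod_encode (L, Sm)"
  define m where "m = Suc t + L"
  let ?uc = "list_encode (map p [0..<m])"
  have Lt: "Lt t = L" and St: "St t = Sm" unfolding t_def Lt_def St_def by simp_all
  have bS: "bitS Sm w \<longleftrightarrow> w \<in> W" for w unfolding Sm_def bitS_mask W_def by auto
  have Jb: "Jb m L = 2 * L" unfolding Jb_def m_def by simp
  have finW: "fin aH n ?uc m L w" if wW: "w \<in> W" for w
  proof -
    obtain q where q: "q \<in> paths T" "bl L w = map q [0..<L]" using wW unfolding W_def by blast
    obtain j where j: "j \<le> 2 * L" "0 < aH (list_encode ((n + 4) # map (bpair p (nm q)) [0..<j]))" using L[OF q(1)] by blast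
    have "Ecode n ?uc w j = list_encode ((n + 4) # map (bpair p (nm q)) [0..<j])"
      by (rule Ecode_eq[OF q(2)]) (use j Jb in simp)
    then show ?thesis unfolding fin_def Jb using j by (intro exI[of _ j]) auto
  qed
  have cwW: "dist (s (cw aH n ?uc m L w)) fx \<le> (1/2) ^ (n + 4)" if wW: "w \<in> W" for w
  proof -
    obtain q where q: "q \<in> paths T" "bl L w = map q [0..<L]" using wW unfolding W_def by blast
    obtain r where r: "kleene_app aH (bpair p (nm q)) = Some r" "cauchy_rep s r = Some fx" using good q(1) by blast
    have "cw aH n ?uc m L w = r (n + 4)" by (rule cw_eq[OF r(1) q(2) finW[OF wW]])
    then show ?thesis using cauchy_dist[OF r(2)] by simp
  qed
  have "succ aH hh n ?uc m t"
    unfolding succ_def Lt St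
  proof (intro conjI allI impI)
    have "{w. w < 2 ^ L \<and> bitS Sm w} = W" using bS unfolding W_def by auto
    then show "2 ^ L < 2 * (\<Sum>w<2 ^ L. Sm div 2 ^ w mod 2)"
      unfolding sum_bits_card using MC2[OF meas, of L] unfolding W_def by simp
    fix w assume "w < 2 ^ L" "bitS Sm w"
    then show "fin aH n ?uc m L w" using finW bS by blast
  next
    fix w w' assume "w < 2 ^ L" "w' < 2 ^ L" "bitS Sm w \<and> bitS Sm w'"
    then have "w \<in> W" "w' \<in> W" using bS by auto
    then have d: "dist (s (cw aH n ?uc m L w)) fx \<le> (1/2) ^ (n + 4)" "dist (s (cw aH n ?uc m L w')) fx \<le> (1/2) ^ (n + 4)"
      using cwW by auto
    have "dist (s (cw aH n ?uc m L w)) (s (cw aH n ?uc m L w')) \<le> (1/2) ^ (n + 4) + (1/2) ^ (n + 4)"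
      using dist_triangle2[of "s (cw aH n ?uc m L w)" "s (cw aH n ?uc m L w')" fx] d by simp
    also have "\<dots> = 8 / 2 ^ (n + 6)" by (simp add: power_one_over power_add)
    finally show "okc hh n (cw aH n ?uc m L w) (cw aH n ?uc m L w')" by (rule okc_complete[OF hp])
  qed
  moreover have "t < m" unfolding m_def by simp
  ultimately show ?thesis by blast
qed

end

lemma extract_T:
  fixes dX :: "baire \<Rightarrow> 'a option" and dY :: "baire \<Rightarrow> 'b option" and f :: "'a \<Rightarrow> 'b"
    and dZ :: "baire \<Rightarrow> 'c option" and g :: "'c \<Rightarrow> bool list set set"
  assumes R: "\<forall>GG. realizer dZ cantor_rep (mv_comp half_wwkl g) GG \<longrightarrow>
      realizer dX dY (\<lambda>x. {f x}) (\<lambda>p. Option.bind (K p) (\<lambda>k. Option.bind (GG k) (\<lambda>q. H (bpair p q))))"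
    and dXp: "dX p = Some x"
  shows "\<exists>T. measure cantor_measure (paths T) > 1/2 \<and> (\<forall>q\<in>paths T. \<exists>r. H (bpair p (nm q)) = Some r \<and> dY r = Some (f x))"
proof -
  define F where "F = mv_comp half_wwkl g"
  define GG0 where "GG0 k = (if \<exists>z. dZ k = Some z \<and> z \<in> mv_dom F then Some (nm (SOME y. y \<in> F (the (dZ k))))
                              else None)" for k
  have real0: "realizer dZ cantor_rep F GG0"
    unfolding realizer_def
  proof (intro allI impI)
    fix k z assume kz: "dZ k = Some z \<and> z \<in> mv_dom F"
    then have ne: "F z \<noteq> {}" unfolding mv_dom_def by simp
    define y0 where "y0 = (SOME y. y \<in> F z)"
    have y0: "y0 \<in> F z" unfolding y0_def using ne by (simp add: some_in_eq)
    have "GG0 k = Some (nm y0)" unfolding GG0_def y0_def using kz by auto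
    then show "\<exists>q y. GG0 k = Some q \<and> cantor_rep q = Some y \<and> y \<in> F z"
      using y0 cantor_rep_nm by blast
  qed
  have xd: "x \<in> mv_dom (\<lambda>x. {f x})" unfolding mv_dom_def by simp
  have "realizer dX dY (\<lambda>x. {f x}) (\<lambda>p. Option.bind (K p) (\<lambda>k. Option.bind (GG0 k) (\<lambda>q. H (bpair p q))))"
    using R real0 unfolding F_def by blast
  then obtain q0 y0 where "Option.bind (K p) (\<lambda>k. Option.bind (GG0 k) (\<lambda>q. H (bpair p q))) = Some q0"
    unfolding realizer_def using dXp xd by blast
  then obtain k where Kp: "K p = Some k" and "GG0 k \<noteq> None"
    by (cases "K p") (auto split: Option.bind_splits)
  then obtain z where z: "dZ k = Some z" "z \<in> mv_dom F" unfolding GG0_def by (auto split: if_splits)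
  then have "F z \<noteq> {}" unfolding mv_dom_def by simp
  then have gz: "g z \<subseteq> mv_dom half_wwkl" and "F z = {y. \<exists>T\<in>g z. y \<in> half_wwkl T}"
    unfolding F_def mv_comp_def by (auto split: if_splits)
  then obtain T where T: "T \<in> g z" "half_wwkl T \<noteq> {}" using \<open>F z \<noteq> {}\<close> by auto
  have Tm: "measure cantor_measure (paths T) > 1/2" and Tp: "half_wwkl T = paths T"
    using T(2) unfolding half_wwkl_def by (auto split: if_splits)
  have "\<forall>q\<in>paths T. \<exists>r. H (bpair p (nm q)) = Some r \<and> dY r = Some (f x)"
  proof
    fix q assume q: "q \<in> paths T"
    define GG1 where "GG1 = GG0(k := Some (nm q))"
    have "q \<in> F z" using \<open>F z = _\<close> T(1) Tp q by auto
    have real1: "realizer dZ cantor_rep F GG1"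
      unfolding realizer_def
    proof (intro allI impI)
      fix k' z' assume kz: "dZ k' = Some z' \<and> z' \<in> mv_dom F"
      show "\<exists>q' y. GG1 k' = Some q' \<and> cantor_rep q' = Some y \<and> y \<in> F z'"
      proof (cases "k' = k")
        case True
        then have "z' = z" using kz z by simp
        then show ?thesis unfolding GG1_def using True \<open>q \<in> F z\<close> cantor_rep_nm by auto
      next
        case False
        then show ?thesis unfolding GG1_def using real0 kz unfolding realizer_def by auto
      qed
    qed
    have "realizer dX dY (\<lambda>x. {f x}) (\<lambda>p. Option.bind (K p) (\<lambda>k. Option.bind (GG1 k) (\<lambda>q. H (bpair p q))))"
      using R real1 unfolding F_def by blast
    then obtain r y where "Option.bind (K p) (\<lambda>k. Option.bind (GG1 k) (\<lambda>q. H (bpair p q))) = Some r"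
      "dY r = Some y" "y \<in> {f x}"
      unfolding realizer_def using dXp xd by blast
    then show "\<exists>r. H (bpair p (nm q)) = Some r \<and> dY r = Some (f x)"
      using Kp unfolding GG1_def by auto
  qed
  with Tm show ?thesis by blast
qed

lemma bfun_enc:
  "bfun a hh (list_encode (n # map p [0..<m])) =
     (if tz a hh n (list_encode (map p [0..<m])) m < m
      then Suc (outv a n (list_encode (map p [0..<m])) m (tz a hh n (list_encode (map p [0..<m])) m)) else 0)"
  unfolding bfun_def by (simp add: llen_enc)

theorem theorem13p2:
  fixes dX :: "baire \<Rightarrow> 'a option"
    and s :: "nat \<Rightarrow> 'b::metric_space"
    and f :: "'a \<Rightarrow> 'b"
    and dZ :: "baire \<Rightarrow> 'c option"
    and g :: "'c \<Rightarrow> bool list set set"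
  assumes "representation dX"
    and "computable_metric_space s"
    and "representation dZ"
    and "\<forall>z. g z \<subseteq> Tr"
    and "weihrauch_le dX (cauchy_rep s) (\<lambda>x. {f x}) dZ cantor_rep (mv_comp half_wwkl g)"
  shows "computable_mv dX (cauchy_rep s) (\<lambda>x. {f x})"
proof -
  obtain H K where cH: "computable_pf H" and R: "\<forall>GG. realizer dZ cantor_rep (mv_comp half_wwkl g) GG \<longrightarrow>
      realizer dX (cauchy_rep s) (\<lambda>x. {f x}) (\<lambda>p. Option.bind (K p) (\<lambda>k. Option.bind (GG k) (\<lambda>q. H (bpair p q))))"
    using assms(5) unfolding weihrauch_le_def by blast
  obtain aH where taH: "total_computable aH" and aH: "\<And>P. H P \<noteq> None \<Longrightarrow> kleene_app aH P = H P"
    using cH unfolding computable_pf_def by blast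
  obtain hh where thh: "total_computable hh"
    and hp: "\<forall>i j n. \<bar>dist (s i) (s j) - rat_of_code (hh (prod_encode (prod_encode (i, j), n)))\<bar> \<le> (1/2) ^ n"
    using assms(2) unfolding computable_metric_space_def by blast
  have caH: "cf (Suc 0) (\<lambda>xs. aH (hd xs))" using cf_total_computable[OF taH] by simp
  have chh: "cf (Suc 0) (\<lambda>xs. hh (hd xs))" using cf_total_computable[OF thh] by simp
  define b where "b = bfun aH hh"
  have tb: "total_computable b" unfolding b_def by (rule tc_bfun[OF caH chh])
  define G where "G = kleene_app b"
  have cG: "computable_pf G" unfolding computable_pf_def G_def using tb by blast
  have "realizer dX (cauchy_rep s) (\<lambda>x. {f x}) G"
    unfolding realizer_def
  proof (intro allI impI)
    fix p x assume px: "dX p = Some x \<and> x \<in> mv_dom (\<lambda>x. {f x})"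
    obtain T where Tm: "measure cantor_measure (paths T) > 1/2"
      and TH: "\<forall>q\<in>paths T. \<exists>r. H (bpair p (nm q)) = Some r \<and> cauchy_rep s r = Some (f x)"
      using extract_T[OF R, of p x] px by blast
    have good: "\<forall>q\<in>paths T. \<exists>r. kleene_app aH (bpair p (nm q)) = Some r \<and> cauchy_rep s r = Some (f x)"
      using TH aH by fastforce
    have found: "\<exists>m. k2_found b p n m" for n
    proof -
      obtain m t where mt: "t < m" "succ aH hh n (list_encode (map p [0..<m])) m t"
        using succ_exists[OF hp Tm good, of n] by blast
      have "tz aH hh n (list_encode (map p [0..<m])) m \<le> t"
        unfolding tz_def by (rule Least_le) (use mt in simp)
      then have "b (list_encode (n # map p [0..<m])) > 0"
        unfolding b_def bfun_enc using mt(1) by simp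
      then show ?thesis unfolding k2_found_def by blast
    qed
    define r where "r n = b (list_encode (n # map p [0..<(LEAST m. k2_found b p n m)])) - 1" for n
    have Gp: "G p = Some r" unfolding G_def r_def by (rule ka_intro) (rule found)
    have rd: "dist (s (r n)) (f x) \<le> 14 / 2 ^ (n + 6)" for n
    proof -
      define M where "M = (LEAST m. k2_found b p n m)"
      have kM: "k2_found b p n M" unfolding M_def using found[of n] by (metis LeastI)
      let ?uc = "list_encode (map p [0..<M])"
      define t0 where "t0 = tz aH hh n ?uc M"
      have pos: "b (list_encode (n # map p [0..<M])) > 0" using kM unfolding k2_found_def .
      then have t0M: "t0 < M" unfolding b_def bfun_enc t0_def by (simp split: if_splits)
      have "t0 = M \<or> succ aH hh n ?uc M t0" unfolding t0_def tz_def by (rule LeastI[of _ M]) simp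
      then have sc: "succ aH hh n ?uc M t0" using t0M by simp
      have "r n = b (list_encode (n # map p [0..<M])) - 1" unfolding r_def M_def ..
      also have "\<dots> = outv aH n ?uc M t0" unfolding b_def bfun_enc t0_def[symmetric]
        using t0M by simp
      finally have "r n = outv aH n ?uc M t0" .
      then show ?thesis using succ_correct[OF hp Tm good sc] by simp
    qed
    have cauchy: "\<forall>i j. i < j \<longrightarrow> dist (s (r i)) (s (r j)) < (1/2) ^ i"
    proof (intro allI impI)
      fix i j :: nat assume ij: "i < j"
      have "dist (s (r i)) (s (r j)) \<le> 14 / 2 ^ (i + 6) + 14 / 2 ^ (j + 6)"
        using dist_triangle2[of "s (r i)" "s (r j)" "f x"] rd[of i] rd[of j] by simp
      also have "14 / 2 ^ (j + 6) \<le> (14::real) / 2 ^ (i + 6)"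
        using ij by (intro divide_left_mono) (auto intro: power_increasing)
      then have "14 / 2 ^ (i + 6) + 14 / 2 ^ (j + 6) \<le> (28::real) / 2 ^ (i + 6)" by simp
      also have "(28::real) / 2 ^ (i + 6) < (1/2) ^ i" by (simp add: power_add power_one_over field_simps)
      finally show "dist (s (r i)) (s (r j)) < (1/2) ^ i" .
    qed
    have lim: "(\<lambda>n. s (r n)) \<longlonglongrightarrow> f x"
    proof -
      have "(\<lambda>n. 14 / 64 * (1/2::real) ^ n) \<longlonglongrightarrow> 14 / 64 * 0"
        by (intro tendsto_mult tendsto_const LIMSEQ_power_zero) simp
      then have z: "(\<lambda>n. 14 / 64 * (1/2::real) ^ n) \<longlonglongrightarrow> 0" by simp
      have "(\<lambda>n. dist (s (r n)) (f x)) \<longlonglongrightarrow> 0"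
      proof (rule Lim_null_comparison[OF _ z])
        show "\<forall>\<^sub>F n in sequentially. norm (dist (s (r n)) (f x)) \<le> 14 / 64 * (1/2) ^ n"
          using rd by (auto simp: power_add power_one_over)
      qed
      then show ?thesis using tendsto_dist_iff by blast
    qed
    have "cauchy_rep s r = Some (f x)"
      unfolding cauchy_rep_def using cauchy lim limI by auto
    then show "\<exists>q y. G p = Some q \<and> cauchy_rep s q = Some y \<and> y \<in> {f x}" using Gp by blast
  qed
  with cG show ?thesis unfolding computable_mv_def by blast
qed

end
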